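(* Let $T$ be a centered CQCA with matrix $\mathbf{a}$ and let $\omega_\xi$ be a pure translation-invariant stabilizer state. Let $E(\omega_\xi,t)$ denote the bipartite entanglement of the evolved state $\omega_\xi\circ T^t$ (again a pure translation-invariant stabilizer state). Then the asymptotic entanglement generation rate $$\lim_{t\to\infty}\frac1t E(\omega_\xi,t)$$ equals $\deg(\mathrm{tr}\,\mathbf{a})$, the highest exponent occurring in the trace polynomial $\mathrm{tr}\,\mathbf{a}$ (taken to be $0$ if $\mathrm{tr}\,\mathbf{a}$ is constant).
   Context: $\mathcal{P}$ = Laurent polynomials in $u$ over $\mathbb{Z}_2$, $\mathcal{R}$ its palindromes ($p(u^{-1})=p(u)$). Pauli products on the chain $\bigotimes_{x\in\mathbb{Z}}M_2$ are labelled by $\xi\in\mathcal{P}^2$: $W(\xi)=\bigotimes_xW(\xi_+(x),\xi_-(x))$, $W(0,0)=\mathbb{1},W(1,0)=\sigma_1,W(0,1)=\sigma_3,W(1,1)=-i\sigma_2$. A CQCA is a translation-commuting automorphism of the chain algebra mapping Pauli products to multiples of Pauli products, $T(W(\xi))=\lambda(\xi)W(\mathbf{a}\xi)$, $|\lambda|=1$; it is centered if $\mathbf{a}$ has entries in $\mathcal{R}$ and determinant 1. For reflection-invariant $\xi$ with $\gcd(\xi_+,\xi_-)=1$, $\omega_\xi$ is the unique state with $\omega_\xi=1$ on the group $\mathcal{S}$ generated by the translates of $W(\xi)$. Bipartite entanglement $E(\omega)$ of such a state: for a cut into left half-chain $A$ and right half-chain $B$, the maximal number of pairs $(W(\eta^i),W(\zeta^i))$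 of elements of the stabilizer group supported on both sides whose restrictions to $A$ anticommute within each pair, commute between different pairs, and commute with all stabilizer elements supported in $A$ (the number of maximally entangled qubit pairs across the cut; it is independent of the cut). *)

theory Defs
  imports "HOL-Analysis.Analysis" "HOL-Library.Poly_Mapping" "HOL-Library.Z2"
    "HOL-Library.Extended_Nat"
begin

text \<open>Laurent polynomials in u over Z_2: finitely supported maps from exponents (int)
  to Z_2, with convolution product (the library ring structure of poly_mapping).\<close>
type_synonym lpoly = "int \<Rightarrow>\<^sub>0 bit"

type_synonym pvec = "lpoly \<times> lpoly"

text \<open>2x2 matrices over P, entries (a_pp, a_pm, a_mp, a_mm).\<close>
type_synonym pmat = "lpoly \<times> lpoly \<times> lpoly \<times> lpoly"

definition palindrome :: "lpoly \<Rightarrow> bool" where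
  "palindrome p \<longleftrightarrow> (\<forall>n. Poly_Mapping.lookup p (- n) = Poly_Mapping.lookup p n)"

definition mapply :: "pmat \<Rightarrow> pvec \<Rightarrow> pvec" where
  "mapply a \<xi> = (case a of (app, apm, amp, amm) \<Rightarrow>
      (app * fst \<xi> + apm * snd \<xi>, amp * fst \<xi> + amm * snd \<xi>))"

definition mtrace :: "pmat \<Rightarrow> lpoly" where
  "mtrace a = (case a of (app, apm, amp, amm) \<Rightarrow> app + amm)"

definition mdet :: "pmat \<Rightarrow> lpoly" where
  "mdet a = (case a of (app, apm, amp, amm) \<Rightarrow> app * amm - apm * amp)"

definition centered :: "pmat \<Rightarrow> bool" where
  "centered a \<longleftrightarrow> (case a of (app, apm, amp, amm) \<Rightarrow>
      palindrome app \<and> palindrome apm \<and> palindrome amp \<and> palindrome amm) \<and> mdet a = 1"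

text \<open>gcd(p,q) = 1 in P: every common divisor is a unit (library coprime, unfolded,
  since poly_mapping is not registered as an algebraic_semidom).\<close>
definition lcoprime :: "lpoly \<Rightarrow> lpoly \<Rightarrow> bool" where
  "lcoprime p q \<longleftrightarrow> (\<forall>d. d dvd p \<longrightarrow> d dvd q \<longrightarrow> d dvd 1)"

definition ldeg :: "lpoly \<Rightarrow> int" where
  "ldeg p = Max (insert 0 (Poly_Mapping.keys p))"

text \<open>Support (set of sites) of the Pauli product W(xi).\<close>
definition psupp :: "pvec \<Rightarrow> int set" where
  "psupp \<xi> = Poly_Mapping.keys (fst \<xi>) \<union> Poly_Mapping.keys (snd \<xi>)"

text \<open>Symplectic commutation form of the restrictions of W(xi), W(eta) to the region A:
  the restrictions commute iff this is 0 and anticommute iff it is 1.\<close>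
definition symp_on :: "int set \<Rightarrow> pvec \<Rightarrow> pvec \<Rightarrow> bit" where
  "symp_on A \<xi> \<eta> = (\<Sum>x \<in> A \<inter> psupp \<xi>.
      Poly_Mapping.lookup (fst \<xi>) x * Poly_Mapping.lookup (snd \<eta>) x + Poly_Mapping.lookup (snd \<xi>) x * Poly_Mapping.lookup (fst \<eta>) x)"

text \<open>Labels (up to phase) of the stabilizer group generated by the translates of W(xi):
  the Z_2-span of u^k xi, i.e. all f xi with f in P.\<close>
definition stab_labels :: "pvec \<Rightarrow> pvec set" where
  "stab_labels \<xi> = {(f * fst \<xi>, f * snd \<xi>) | f. True}"

text \<open>Labels of the stabilizer group of the evolved state omega_xi o T^t, where
  T(W(eta)) = lambda(eta) W(a eta): W(eta) is a stabilizer (up to phase) of omega o T^t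
  iff a^t eta is a stabilizer label of omega.\<close>
definition evolved_stab :: "pmat \<Rightarrow> pvec \<Rightarrow> nat \<Rightarrow> pvec set" where
  "evolved_stab a \<xi> t = {\<eta>. (mapply a ^^ t) \<eta> \<in> stab_labels \<xi>}"

text \<open>n entangled pairs across the cut A = {x < c}, B = {x >= c} for stabilizer group S.\<close>
definition ent_pairs :: "int \<Rightarrow> pvec set \<Rightarrow> nat \<Rightarrow> bool" where
  "ent_pairs c S n \<longleftrightarrow> (\<exists>\<eta> \<zeta> :: nat \<Rightarrow> pvec.
     (\<forall>i<n. \<eta> i \<in> S \<and> \<zeta> i \<in> S) \<and>
     (\<forall>i<n. psupp (\<eta> i) \<inter> {..<c} \<noteq> {} \<and> psupp (\<eta> i) \<inter> {c..} \<noteq> {} \<and>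
            psupp (\<zeta> i) \<inter> {..<c} \<noteq> {} \<and> psupp (\<zeta> i) \<inter> {c..} \<noteq> {}) \<and>
     (\<forall>i<n. symp_on {..<c} (\<eta> i) (\<zeta> i) = 1) \<and>
     (\<forall>i<n. \<forall>j<n. i \<noteq> j \<longrightarrow>
        symp_on {..<c} (\<eta> i) (\<eta> j) = 0 \<and> symp_on {..<c} (\<eta> i) (\<zeta> j) = 0 \<and>
        symp_on {..<c} (\<zeta> i) (\<eta> j) = 0 \<and> symp_on {..<c} (\<zeta> i) (\<zeta> j) = 0) \<and>
     (\<forall>i<n. \<forall>g\<in>S. psupp g \<subseteq> {..<c} \<longrightarrow>
        symp_on {..<c} (\<eta> i) g = 0 \<and> symp_on {..<c} (\<zeta> i) g = 0))"

definition entanglement :: "int \<Rightarrow> pvec set \<Rightarrow> enat" where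
  "entanglement c S = Sup (enat ` {n. ent_pairs c S n})"

end

theory Submission
  imports Defs
begin

declare add_bit_eq_xor[simp del] mult_bit_eq_and[simp del]

abbreviation lk :: "lpoly \<Rightarrow> int \<Rightarrow> bit" where "lk \<equiv> Poly_Mapping.lookup"
abbreviation ks :: "lpoly \<Rightarrow> int set" where "ks \<equiv> Poly_Mapping.keys"

lemma bit_add_self[simp]: "(x::bit) + x = 0" by (cases x) simp_all
lemma lp_add_self[simp]: "(x::lpoly) + x = 0"
  by (rule poly_mapping_eqI) (simp only: lookup_add bit_add_self lookup_zero)
lemma lp_minus: "(x::lpoly) - y = x + y"
  by (rule poly_mapping_eqI) (simp only: lookup_minus lookup_add minus_bit_def)
lemma lp_add_cancel: "(x::lpoly) + y = z \<longleftrightarrow> x = z + y"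
  by (metis add.assoc add_0_right lp_add_self)

lemma lookup_mult_keys:
  "lk (f * g) k = (\<Sum>l\<in>ks f. lk f l * lk g (k - l))"
proof -
  have 1: "(\<Sum>q. lk g q when k = l + q) = lk g (k - l)" for l
  proof -
    have "(\<Sum>q. lk g q when k = l + q) = (\<Sum>q. lk g q when q = k - l)"
      by (rule Sum_any.cong) (auto simp: when_def)
    then show ?thesis by simp
  qed
  have "lk (f * g) k = (\<Sum>l. lk f l * lk g (k - l))"
    unfolding lookup_mult 1 ..
  also have "\<dots> = (\<Sum>l\<in>ks f. lk f l * lk g (k - l))"
    by (rule Sum_any.expand_superset) (auto simp: in_keys_iff)
  finally show ?thesis .
qed

definition mon :: "int \<Rightarrow> lpoly" where "mon k = Poly_Mapping.single k 1"

lemma lookup_mon: "lk (mon k) x = (if x = k then 1 else 0)"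
  by (simp add: mon_def lookup_single when_def)
lemma keys_mon[simp]: "ks (mon k) = {k}"
  by (simp add: mon_def)

lemma lookup_mon_mult: "lk (mon j * p) k = lk p (k - j)"
  by (simp add: lookup_mult_keys lookup_mon)

lemma mon_mult: "mon i * mon j = mon (i + j)"
  by (simp add: mon_def mult_single)

lemma mon_0: "mon 0 = 1"
  by (simp add: mon_def)

definition refl :: "lpoly \<Rightarrow> lpoly" where
  "refl p = Abs_poly_mapping (\<lambda>k. lk p (- k))"

lemma lookup_refl[simp]: "lk (refl p) k = lk p (- k)"
proof -
  have "{k. lk p (- k) \<noteq> 0} = uminus ` ks p"
    by (force simp: in_keys_iff image_iff)
  then have "finite {k. lk p (- k) \<noteq> 0}" by simp
  then show ?thesis unfolding refl_def by simp
qed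

lemma keys_refl: "ks (refl p) = uminus ` ks p"
  by (force simp: in_keys_iff image_iff)

lemma refl_add: "refl (p + q) = refl p + refl q"
  by (rule poly_mapping_eqI) (simp add: lookup_add)

lemma refl_mult: "refl (p * q) = refl p * refl q"
proof (rule poly_mapping_eqI)
  fix k
  have "lk (refl (p * q)) k = (\<Sum>l\<in>ks p. lk p l * lk q (- k - l))"
    by (simp add: lookup_mult_keys)
  also have "\<dots> = (\<Sum>x\<in>ks p. lk (refl p) (-x) * lk (refl q) (k - (-x)))"
  proof (rule sum.cong[OF refl])
    fix x
    have e: "- (k - - x) = - k - x" by simp
    have "lk (refl q) (k - - x) = lk q (- k - x)" by (metis lookup_refl e)
    moreover have "lk (refl p) (-x) = lk p x" by simp
    ultimately show "lk p x * lk q (- k - x) = lk (refl p) (-x) * lk (refl q) (k - (-x))" by simp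
  qed
  also have "\<dots> = (\<Sum>l\<in>uminus ` ks p. lk (refl p) l * lk (refl q) (k - l))"
  proof -
    have inj: "inj_on uminus (ks p)" by (simp add: inj_on_def)
    show ?thesis by (simp only: sum.reindex[OF inj] o_def)
  qed
  also have "\<dots> = (\<Sum>l\<in>ks (refl p). lk (refl p) l * lk (refl q) (k - l))"
    unfolding keys_refl ..
  also have "\<dots> = lk (refl p * refl q) k"
    by (simp add: lookup_mult_keys)
  finally show "lk (refl (p * q)) k = lk (refl p * refl q) k" .
qed

lemma refl_mon: "refl (mon k) = mon (- k)"
  by (rule poly_mapping_eqI) (auto simp: lookup_mon)

lemma palindrome_refl: "palindrome p \<longleftrightarrow> refl p = p"
  unfolding palindrome_def poly_mapping_eq_iff by (auto simp: fun_eq_iff)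

lemma pal_add: "palindrome p \<Longrightarrow> palindrome q \<Longrightarrow> palindrome (p + q)"
  by (simp add: palindrome_refl refl_add)
lemma pal_mult: "palindrome p \<Longrightarrow> palindrome q \<Longrightarrow> palindrome (p * q)"
  by (simp add: palindrome_refl refl_mult)
lemma pal_one: "palindrome 1" by (simp add: palindrome_def lookup_one when_def)
lemma pal_zero: "palindrome 0" by (simp add: palindrome_def)

definition dotp :: "lpoly \<Rightarrow> lpoly \<Rightarrow> bit" where
  "dotp a b = lk (a * refl b) 0"

lemma dotp_sum: "finite K \<Longrightarrow> ks a \<subseteq> K \<Longrightarrow> dotp a b = (\<Sum>x\<in>K. lk a x * lk b x)"
proof -
  assume K: "finite K" "ks a \<subseteq> K"
  have "dotp a b = (\<Sum>l\<in>ks a. lk a l * lk b l)"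
    by (simp add: dotp_def lookup_mult_keys)
  also have "\<dots> = (\<Sum>x\<in>K. lk a x * lk b x)"
    by (rule sum.mono_neutral_left) (use K in \<open>auto simp: in_keys_iff\<close>)
  finally show ?thesis .
qed

lemma dotp_add1: "dotp (a + a') b = dotp a b + dotp a' b"
  by (simp add: dotp_def distrib_right lookup_add)
lemma dotp_add2: "dotp a (b + b') = dotp a b + dotp a b'"
  by (simp add: dotp_def distrib_left lookup_add refl_add)

lemma dotp_mon: "dotp a (mon k * b) = lk (a * refl b) k"
proof -
  have e: "a * refl (mon k * b) = mon (- k) * (a * refl b)"
    by (simp only: refl_mult refl_mon mult.left_commute)
  show ?thesis unfolding dotp_def e lookup_mon_mult by simp
qed

definition sc :: "lpoly \<Rightarrow> pvec \<Rightarrow> pvec" where "sc f v = (f * fst v, f * snd v)"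
definition padd :: "pvec \<Rightarrow> pvec \<Rightarrow> pvec" where "padd v w = (fst v + fst w, snd v + snd w)"

lemma sc_add: "sc (f + g) v = padd (sc f v) (sc g v)"
  by (simp add: sc_def padd_def distrib_right)

lemma finite_psupp[simp]: "finite (psupp v)"
  by (simp add: psupp_def)

lemma lookup_outside_psupp: "x \<notin> psupp v \<Longrightarrow> lk (fst v) x = 0 \<and> lk (snd v) x = 0"
  by (auto simp: psupp_def in_keys_iff)

lemma psupp_padd: "psupp (padd v w) \<subseteq> psupp v \<union> psupp w"
  using keys_add[of "fst v" "fst w"] keys_add[of "snd v" "snd w"]
  by (auto simp: psupp_def padd_def)

definition st :: "pvec \<Rightarrow> pvec \<Rightarrow> int \<Rightarrow> bit" where
  "st v w x = lk (fst v) x * lk (snd w) x + lk (snd v) x * lk (fst w) x"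

lemma symp_on_K:
  assumes "finite K" "psupp v \<subseteq> K"
  shows "symp_on A v w = (\<Sum>x\<in>A \<inter> K. st v w x)"
  unfolding symp_on_def st_def[symmetric]
  by (rule sum.mono_neutral_left) (use assms lookup_outside_psupp in \<open>auto simp: st_def\<close>)

lemma symp_on_K2:
  assumes "finite K" "psupp w \<subseteq> K"
  shows "symp_on A v w = (\<Sum>x\<in>A \<inter> K. st v w x)"
proof -
  have "symp_on A v w = (\<Sum>x\<in>A \<inter> (K \<union> psupp v). st v w x)"
    by (rule symp_on_K) (use assms in auto)
  also have "\<dots> = (\<Sum>x\<in>A \<inter> K. st v w x)"
  proof (rule sum.mono_neutral_right)
    show "finite (A \<inter> (K \<union> psupp v))" using assms(1) by simp
    show "A \<inter> K \<subseteq> A \<inter> (K \<union> psupp v)" by blast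
    show "\<forall>x\<in>A \<inter> (K \<union> psupp v) - A \<inter> K. st v w x = 0"
    proof
      fix x assume "x \<in> A \<inter> (K \<union> psupp v) - A \<inter> K"
      then have "x \<notin> psupp w" using assms(2) by blast
      then show "st v w x = 0" using lookup_outside_psupp[of x w] by (simp add: st_def)
    qed
  qed
  finally show ?thesis .
qed

lemma symp_on_sym: "symp_on A v w = symp_on A w v"
proof -
  have "symp_on A v w = (\<Sum>x\<in>A \<inter> psupp w. st v w x)"
    by (rule symp_on_K2) auto
  also have "\<dots> = (\<Sum>x\<in>A \<inter> psupp w. st w v x)"
    by (rule sum.cong) (simp_all add: st_def add.commute mult.commute)
  also have "\<dots> = symp_on A w v"
    by (rule symp_on_K[symmetric]) auto
  finally show ?thesis .
qed

lemma symp_on_self: "symp_on A v v = 0"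
  unfolding symp_on_def by (rule sum.neutral) (simp add: mult.commute)

lemma symp_on_padd:
  "symp_on A (padd v1 v2) w = symp_on A v1 w + symp_on A v2 w"
proof -
  let ?K = "psupp v1 \<union> psupp v2"
  have "symp_on A (padd v1 v2) w = (\<Sum>x\<in>A \<inter> ?K. st (padd v1 v2) w x)"
    by (rule symp_on_K) (use psupp_padd in auto)
  also have "\<dots> = (\<Sum>x\<in>A \<inter> ?K. st v1 w x + st v2 w x)"
    by (rule sum.cong) (simp_all add: st_def padd_def lookup_add algebra_simps)
  also have "\<dots> = symp_on A v1 w + symp_on A v2 w"
    by (simp add: sum.distrib symp_on_K[of ?K])
  finally show ?thesis .
qed

lemma symp_on_padd2:
  "symp_on A w (padd v1 v2) = symp_on A w v1 + symp_on A w v2"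
  by (metis symp_on_padd symp_on_sym)

lemma symp_on_zeroA: "(\<And>x. x \<in> A \<Longrightarrow> lk (fst w) x = 0 \<and> lk (snd w) x = 0) \<Longrightarrow> symp_on A v w = 0"
  unfolding symp_on_def by (rule sum.neutral) auto

lemma symp_on_disj: "A \<inter> psupp v = {} \<Longrightarrow> symp_on A v w = 0"
  unfolding symp_on_def by simp

lemma symp_on_sub: "psupp v \<subseteq> A \<Longrightarrow> symp_on A v w = symp_on UNIV v w"
  unfolding symp_on_def by (simp add: Int_absorb1 Int_absorb2)

lemma symp_UNIV_dotp: "symp_on UNIV v w = dotp (fst v) (snd w) + dotp (snd v) (fst w)"
proof -
  have "symp_on UNIV v w = (\<Sum>x\<in>psupp v. st v w x)" by (simp add: symp_on_def st_def)
  also have "\<dots> = dotp (fst v) (snd w) + dotp (snd v) (fst w)"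
    by (simp add: st_def sum.distrib dotp_sum[of "psupp v"] psupp_def)
  finally show ?thesis .
qed

lemma isotropic:
  assumes "palindrome (fst z)" "palindrome (snd z)"
  shows "symp_on UNIV (sc f z) (sc g z) = 0"
proof -
  have e: "f * fst z * refl (g * snd z) = f * snd z * refl (g * fst z)"
    using assms by (simp add: refl_mult palindrome_refl algebra_simps)
  show ?thesis by (simp only: symp_UNIV_dotp sc_def dotp_def fst_conv snd_conv e bit_add_self)
qed

lemma symp_mon:
  assumes "palindrome (fst z)" "palindrome (snd z)"
  shows "symp_on UNIV v (sc (mon k) z) = lk (fst v * snd z + snd v * fst z) k"
  using assms by (simp add: symp_UNIV_dotp sc_def dotp_mon palindrome_refl lookup_add)

definition restr :: "int set \<Rightarrow> lpoly \<Rightarrow> lpoly" where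
  "restr A p = Abs_poly_mapping (\<lambda>k. if k \<in> A then lk p k else 0)"

lemma lookup_restr[simp]: "lk (restr A p) k = (if k \<in> A then lk p k else 0)"
proof -
  have "{k. (if k \<in> A then lk p k else 0) \<noteq> 0} \<subseteq> ks p" by (auto simp: in_keys_iff)
  then have "finite {k. (if k \<in> A then lk p k else 0) \<noteq> 0}" by (rule finite_subset) simp
  then show ?thesis by (simp add: restr_def)
qed

definition rA :: "int set \<Rightarrow> pvec \<Rightarrow> pvec" where
  "rA A v = (restr A (fst v), restr A (snd v))"

lemma psupp_rA: "psupp (rA A v) = A \<inter> psupp v"
  by (auto simp: psupp_def rA_def in_keys_iff split: if_splits)

lemma symp_on_rA: "symp_on A v w = symp_on UNIV (rA A v) w"
proof -
  have "symp_on UNIV (rA A v) w = (\<Sum>x\<in>A \<inter> psupp v. st (rA A v) w x)"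
    by (simp add: symp_on_def psupp_rA st_def)
  also have "\<dots> = (\<Sum>x\<in>A \<inter> psupp v. st v w x)"
    by (rule sum.cong) (auto simp: rA_def st_def)
  finally show ?thesis by (simp add: symp_on_def st_def)
qed

lemma lp_two[simp]: "(2::lpoly) = 0"
  by (metis one_add_one lp_add_self)

lemma nz_keys: "(p::lpoly) \<noteq> 0 \<Longrightarrow> ks p \<noteq> {}"
  by simp

lemma Max_in_keys: "(p::lpoly) \<noteq> 0 \<Longrightarrow> Max (ks p) \<in> ks p"
  using nz_keys by (intro Max_in) auto
lemma Min_in_keys: "(p::lpoly) \<noteq> 0 \<Longrightarrow> Min (ks p) \<in> ks p"
  using nz_keys by (intro Min_in) auto
lemma le_Max_keys: "x \<in> ks (p::lpoly) \<Longrightarrow> x \<le> Max (ks p)" by simp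
lemma Min_le_keys: "x \<in> ks (p::lpoly) \<Longrightarrow> Min (ks p) \<le> x" by simp

lemma in_keys_one: "x \<in> ks p \<longleftrightarrow> lk p x = 1"
  by (simp add: in_keys_iff)

lemma max_key_mult:
  assumes f: "f \<noteq> 0" and g: "g \<noteq> 0"
  shows "Max (ks f) + Max (ks g) \<in> ks (f * g)"
proof -
  let ?M = "Max (ks f)" and ?N = "Max (ks g)"
  have "lk (f * g) (?M + ?N) = (\<Sum>l\<in>ks f. lk f l * lk g (?M + ?N - l))"
    by (rule lookup_mult_keys)
  also have "\<dots> = lk f ?M * lk g (?M + ?N - ?M) + (\<Sum>l\<in>ks f - {?M}. lk f l * lk g (?M + ?N - l))"
    using Max_in_keys[OF f] by (subst sum.remove) auto
  also have "(\<Sum>l\<in>ks f - {?M}. lk f l * lk g (?M + ?N - l)) = 0"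
  proof (rule sum.neutral, rule ballI)
    fix l assume l: "l \<in> ks f - {?M}"
    then have "l < ?M" using le_Max_keys[of l f] by (auto simp: less_le)
    then have "?M + ?N - l \<notin> ks g"
    proof -
      assume lM: "l < ?M"
      show ?thesis
      proof
        assume "?M + ?N - l \<in> ks g"
        then have "?M + ?N - l \<le> ?N" by (rule le_Max_keys)
        then show False using lM by linarith
      qed
    qed
    then show "lk f l * lk g (?M + ?N - l) = 0" by (simp add: in_keys_iff)
  qed
  also have "lk f ?M * lk g (?M + ?N - ?M) = 1"
    using Max_in_keys[OF f] Max_in_keys[OF g] by (simp add: in_keys_one)
  finally show ?thesis by (simp add: in_keys_one)
qed

lemma min_key_mult:
  assumes f: "f \<noteq> 0" and g: "g \<noteq> 0"
  shows "Min (ks f) + Min (ks g) \<in> ks (f * g)"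
proof -
  let ?M = "Min (ks f)" and ?N = "Min (ks g)"
  have "lk (f * g) (?M + ?N) = (\<Sum>l\<in>ks f. lk f l * lk g (?M + ?N - l))"
    by (rule lookup_mult_keys)
  also have "\<dots> = lk f ?M * lk g (?M + ?N - ?M) + (\<Sum>l\<in>ks f - {?M}. lk f l * lk g (?M + ?N - l))"
    using Min_in_keys[OF f] by (subst sum.remove) auto
  also have "(\<Sum>l\<in>ks f - {?M}. lk f l * lk g (?M + ?N - l)) = 0"
  proof (rule sum.neutral, rule ballI)
    fix l assume l: "l \<in> ks f - {?M}"
    then have "l > ?M" using Min_le_keys[of l f] by (auto simp: less_le)
    then have "?M + ?N - l \<notin> ks g"
    proof -
      assume lM: "l > ?M"
      show ?thesis
      proof
        assume "?M + ?N - l \<in> ks g"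
        then have "?N \<le> ?M + ?N - l" by (rule Min_le_keys)
        then show False using lM by linarith
      qed
    qed
    then show "lk f l * lk g (?M + ?N - l) = 0" by (simp add: in_keys_iff)
  qed
  also have "lk f ?M * lk g (?M + ?N - ?M) = 1"
    using Min_in_keys[OF f] Min_in_keys[OF g] by (simp add: in_keys_one)
  finally show ?thesis by (simp add: in_keys_one)
qed

lemma keys_mult_ex: "x \<in> ks (f * g) \<Longrightarrow> \<exists>a\<in>ks f. \<exists>b\<in>ks g. x = a + b"
  using keys_mult[of f g] by blast

lemma keys_mult_le: "x \<in> ks (f * g) \<Longrightarrow> x \<le> Max (ks f) + Max (ks g)"
proof -
  assume "x \<in> ks (f * g)"
  then obtain a b where "a \<in> ks f" "b \<in> ks g" "x = a + b" using keys_mult_ex by blast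
  then show ?thesis using le_Max_keys[of a f] le_Max_keys[of b g] by linarith
qed
lemma keys_mult_ge: "x \<in> ks (f * g) \<Longrightarrow> Min (ks f) + Min (ks g) \<le> x"
proof -
  assume "x \<in> ks (f * g)"
  then obtain a b where "a \<in> ks f" "b \<in> ks g" "x = a + b" using keys_mult_ex by blast
  then show ?thesis using Min_le_keys[of a f] Min_le_keys[of b g] by linarith
qed

lemma keys_mon_mult: "x \<in> ks (mon j * g) \<longleftrightarrow> x - j \<in> ks g"
  by (simp add: in_keys_iff lookup_mon_mult)

definition spn :: "lpoly \<Rightarrow> nat" where "spn p = nat (Max (ks p) - Min (ks p))"

lemma divmod_lp:
  assumes g: "g \<noteq> 0"
  shows "\<exists>s r. x = s * g + r \<and> (r = 0 \<or> spn r < spn g)"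
proof (induction "spn x" arbitrary: x rule: less_induct)
  case less
  show ?case
  proof (cases "x = 0 \<or> spn x < spn g")
    case True
    then show ?thesis by (rule_tac x=0 in exI, rule_tac x=x in exI) auto
  next
    case False
    then have x: "x \<noteq> 0" and sp: "spn g \<le> spn x" by auto
    let ?Mx = "Max (ks x)" and ?mx = "Min (ks x)" and ?Mg = "Max (ks g)" and ?mg = "Min (ks g)"
    define j where "j = ?Mx - ?Mg"
    define x' where "x' = x + mon j * g"
    have mxMx: "?mx \<le> ?Mx" using Min_in_keys[OF x] le_Max_keys by blast
    have mgMg: "?mg \<le> ?Mg" using Min_in_keys[OF g] le_Max_keys by blast
    have spI: "?Mx - ?mx \<ge> ?Mg - ?mg" using sp mxMx mgMg unfolding spn_def by linarith
    have kx': "ks x' \<subseteq> {?mx..?Mx - 1}"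
    proof
      fix k assume k: "k \<in> ks x'"
      have "k \<in> ks x \<union> ks (mon j * g)" using k keys_add[of x "mon j * g"] unfolding x'_def by blast
      then have range: "?mx \<le> k \<and> k \<le> ?Mx"
      proof
        assume "k \<in> ks x" then show ?thesis by simp
      next
        assume "k \<in> ks (mon j * g)"
        then have "k - j \<in> ks g" by (simp add: keys_mon_mult)
        then have "?mg \<le> k - j" "k - j \<le> ?Mg" by simp_all
        then show ?thesis using spI unfolding j_def by linarith
      qed
      have "k \<noteq> ?Mx"
      proof
        assume "k = ?Mx"
        then have "lk x' k = lk x ?Mx + lk g ?Mg"
          by (simp add: x'_def lookup_add lookup_mon_mult j_def)
        also have "\<dots> = 0" using Max_in_keys[OF x] Max_in_keys[OF g] by (simp add: in_keys_one)
        finally show False using k by (simp add: in_keys_iff)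
      qed
      then show "k \<in> {?mx..?Mx - 1}" using range by auto
    qed
    have "\<exists>s r. x' = s * g + r \<and> (r = 0 \<or> spn r < spn g)"
    proof (cases "x' = 0")
      case True then show ?thesis by (rule_tac x=0 in exI, rule_tac x=0 in exI) simp
    next
      case False
      have "Max (ks x') \<le> ?Mx - 1" using Max_in_keys[OF False] kx' by auto
      moreover have "?mx \<le> Min (ks x')" using Min_in_keys[OF False] kx' by auto
      moreover have "Min (ks x') \<le> Max (ks x')" using Min_in_keys[OF False] le_Max_keys by blast
      ultimately have "spn x' < spn x" unfolding spn_def using mxMx by linarith
      then show ?thesis using less by blast
    qed
    then obtain s r where sr: "x' = s * g + r" "r = 0 \<or> spn r < spn g" by blast
    have "x = x' + mon j * g" by (simp add: x'_def add.assoc)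
    also have "\<dots> = (s + mon j) * g + r" by (simp add: sr(1) algebra_simps)
    finally show ?thesis using sr(2) by blast
  qed
qed

lemma bezout_lp:
  assumes "lcoprime p q"
  shows "\<exists>a b. a * p + b * q = 1"
proof -
  define I where "I = {g. g \<noteq> 0 \<and> (\<exists>a b. g = a * p + b * q)}"
  have pq: "p \<noteq> 0 \<or> q \<noteq> 0"
  proof (rule ccontr)
    assume "\<not> ?thesis"
    then have "(0::lpoly) dvd 1" using assms unfolding lcoprime_def by auto
    then show False by simp
  qed
  have "I \<noteq> {}"
  proof (cases "p = 0")
    case True then have "q \<noteq> 0" using pq by simp
    moreover have "q = 0 * p + 1 * q" by simp
    ultimately have "q \<in> I" unfolding I_def by blast
    then show ?thesis by blast
  next
    case False
    have "p = 1 * p + 0 * q" by simp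
    with False have "p \<in> I" unfolding I_def by blast
    then show ?thesis by blast
  qed
  then obtain g0 where "g0 \<in> I" by blast
  obtain g where gI: "g \<in> I" and gmin: "\<And>h. h \<in> I \<Longrightarrow> spn g \<le> spn h"
    using ex_has_least_nat[of "\<lambda>h. h \<in> I" g0 spn] \<open>g0 \<in> I\<close> by blast
  from gI obtain a b where g: "g \<noteq> 0" "g = a * p + b * q" unfolding I_def by blast
  have dv: "g dvd x" if x: "\<exists>c d. x = c * p + d * q" for x
  proof -
    obtain s r where sr: "x = s * g + r" "r = 0 \<or> spn r < spn g" using divmod_lp[OF g(1)] by blast
    obtain c d where cd: "x = c * p + d * q" using x by blast
    have "r = x + s * g"
    proof -
      have "x + s * g = r + (s * g + s * g)" by (simp only: sr(1) add_ac)
      then show ?thesis by simp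
    qed
    also have "\<dots> = (c + s * a) * p + (d + s * b) * q" by (simp add: cd g(2) algebra_simps)
    finally have rr: "r = (c + s * a) * p + (d + s * b) * q" .
    have "r = 0"
    proof (rule ccontr)
      assume "r \<noteq> 0"
      then have "r \<in> I" using rr unfolding I_def by blast
      then have "spn g \<le> spn r" by (rule gmin)
      then show False using sr(2) \<open>r \<noteq> 0\<close> by simp
    qed
    then show ?thesis using sr(1) by simp
  qed
  have "g dvd p" by (rule dv) (metis add_0_right mult_1 mult_zero_left)
  moreover have "g dvd q" by (rule dv) (metis add_0 mult_1 mult_zero_left)
  ultimately have "g dvd 1" using assms unfolding lcoprime_def by blast
  then obtain e where "1 = g * e" by (auto elim: dvdE)
  then have "(e * a) * p + (e * b) * q = 1" by (simp add: g(2) algebra_simps)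
  then show ?thesis by blast
qed

definition adj :: "pmat \<Rightarrow> pmat" where
  "adj a = (case a of (x, y, z, w) \<Rightarrow> (w, y, z, x))"

definition palv :: "pvec \<Rightarrow> bool" where
  "palv v \<longleftrightarrow> palindrome (fst v) \<and> palindrome (snd v)"

lemma det1: "mdet (x, y, z, w) = 1 \<Longrightarrow> x * w + y * z = 1"
  by (simp add: mdet_def lp_minus)

lemma mapply_adj1:
  assumes "mdet a = 1" shows "mapply (adj a) (mapply a v) = v"
proof -
  obtain x y z w where a: "a = (x, y, z, w)" by (cases a) auto
  obtain v1 v2 where v: "v = (v1, v2)" by (cases v) auto
  have d: "x * w + y * z = 1" using assms a det1 by simp
  have e1: "w * (x * v1 + y * v2) + y * (z * v1 + w * v2) = (x * w + y * z) * v1 + (w * y * v2 + w * y * v2)"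
    by (simp add: algebra_simps)
  have e2: "z * (x * v1 + y * v2) + x * (z * v1 + w * v2) = (x * w + y * z) * v2 + (x * z * v1 + x * z * v1)"
    by (simp add: algebra_simps)
  show ?thesis by (simp add: a v adj_def mapply_def e1 e2 d)
qed

lemma mapply_adj2:
  assumes "mdet a = 1" shows "mapply a (mapply (adj a) v) = v"
proof -
  obtain x y z w where a: "a = (x, y, z, w)" by (cases a) auto
  obtain v1 v2 where v: "v = (v1, v2)" by (cases v) auto
  have d: "x * w + y * z = 1" using assms a det1 by simp
  have e1: "x * (w * v1 + y * v2) + y * (z * v1 + x * v2) = (x * w + y * z) * v1 + (x * y * v2 + x * y * v2)"
    by (simp add: algebra_simps)
  have e2: "z * (w * v1 + y * v2) + w * (z * v1 + x * v2) = (x * w + y * z) * v2 + (w * z * v1 + w * z * v1)"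
    by (simp add: algebra_simps)
  show ?thesis by (simp add: a v adj_def mapply_def e1 e2 d)
qed

lemma mapply_sc: "mapply a (sc f v) = sc f (mapply a v)"
  by (cases a) (simp add: mapply_def sc_def algebra_simps)

lemma mapply_CH:
  assumes "mdet a = 1"
  shows "mapply (adj a) (mapply (adj a) v) = padd (sc (mtrace a) (mapply (adj a) v)) v"
proof -
  obtain x y z w where a: "a = (x, y, z, w)" by (cases a) auto
  obtain v1 v2 where v: "v = (v1, v2)" by (cases v) auto
  have d: "x * w + y * z = 1" using assms a det1 by simp
  have e1: "w * (w * v1 + y * v2) + y * (z * v1 + x * v2) =
      (x + w) * (w * v1 + y * v2) + (x * w + y * z) * v1 + (x * w * v1 + x * w * v1)"
    by (simp add: algebra_simps)
  have e2: "z * (w * v1 + y * v2) + x * (z * v1 + x * v2) =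
      (x + w) * (z * v1 + x * v2) + (x * w + y * z) * v2 + (w * z * v1 + w * z * v1)"
    by (simp add: algebra_simps)
  show ?thesis by (simp add: a v adj_def mapply_def mtrace_def sc_def padd_def e1 e2 d)
qed

lemma palv_mapply:
  assumes "centered a" "palv v" shows "palv (mapply a v)" "palv (mapply (adj a) v)"
proof -
  obtain x y z w where a: "a = (x, y, z, w)" by (cases a) auto
  have p: "palindrome x" "palindrome y" "palindrome z" "palindrome w"
    using assms(1) a by (simp_all add: centered_def)
  show "palv (mapply a v)" using p assms(2)
    by (simp add: a mapply_def palv_def pal_add pal_mult)
  show "palv (mapply (adj a) v)" using p assms(2)
    by (simp add: a adj_def mapply_def palv_def pal_add pal_mult)
qed

lemma pal_trace: "centered a \<Longrightarrow> palindrome (mtrace a)"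
  by (cases a) (simp add: centered_def mtrace_def pal_add)

definition zt :: "pmat \<Rightarrow> pvec \<Rightarrow> nat \<Rightarrow> pvec" where
  "zt a \<xi> t = (mapply (adj a) ^^ t) \<xi>"

lemma zt_Suc: "zt a \<xi> (Suc t) = mapply (adj a) (zt a \<xi> t)"
  by (simp add: zt_def)

lemma funpow_sc: "(mapply a ^^ t) (sc f v) = sc f ((mapply a ^^ t) v)"
  by (induction t) (simp_all add: mapply_sc)

lemma funpow_inv1:
  assumes "mdet a = 1" shows "(mapply (adj a) ^^ t) ((mapply a ^^ t) v) = v"
proof (induction t arbitrary: v)
  case 0 then show ?case by simp
next
  case (Suc t)
  have "(mapply (adj a) ^^ Suc t) ((mapply a ^^ Suc t) v) =
        (mapply (adj a) ^^ t) (mapply (adj a) (mapply a ((mapply a ^^ t) v)))"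
    by (simp add: funpow_swap1)
  also have "\<dots> = v" using Suc mapply_adj1[OF assms] by simp
  finally show ?case .
qed

lemma funpow_inv2:
  assumes "mdet a = 1" shows "(mapply a ^^ t) ((mapply (adj a) ^^ t) v) = v"
proof (induction t arbitrary: v)
  case 0 then show ?case by simp
next
  case (Suc t)
  have "(mapply a ^^ Suc t) ((mapply (adj a) ^^ Suc t) v) =
        (mapply a ^^ t) (mapply a (mapply (adj a) ((mapply (adj a) ^^ t) v)))"
    by (simp add: funpow_swap1)
  also have "\<dots> = v" using Suc mapply_adj2[OF assms] by simp
  finally show ?case .
qed

lemma evolved_eq:
  assumes "mdet a = 1"
  shows "evolved_stab a \<xi> t = range (\<lambda>f. sc f (zt a \<xi> t))"
proof
  show "evolved_stab a \<xi> t \<subseteq> range (\<lambda>f. sc f (zt a \<xi> t))"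
  proof
    fix \<eta> assume "\<eta> \<in> evolved_stab a \<xi> t"
    then obtain f where f: "(mapply a ^^ t) \<eta> = sc f \<xi>"
      by (auto simp: evolved_stab_def stab_labels_def sc_def)
    have "\<eta> = (mapply (adj a) ^^ t) ((mapply a ^^ t) \<eta>)" by (simp add: funpow_inv1[OF assms])
    also have "\<dots> = sc f (zt a \<xi> t)" by (simp add: f funpow_sc zt_def)
    finally show "\<eta> \<in> range (\<lambda>f. sc f (zt a \<xi> t))" by blast
  qed
  show "range (\<lambda>f. sc f (zt a \<xi> t)) \<subseteq> evolved_stab a \<xi> t"
  proof
    fix \<eta> assume "\<eta> \<in> range (\<lambda>f. sc f (zt a \<xi> t))"
    then obtain f where "\<eta> = sc f (zt a \<xi> t)" by blast
    then have "(mapply a ^^ t) \<eta> = sc f \<xi>" by (simp add: funpow_sc zt_def funpow_inv2[OF assms])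
    then show "\<eta> \<in> evolved_stab a \<xi> t" by (auto simp: evolved_stab_def stab_labels_def sc_def)
  qed
qed

lemma palv_zt: "centered a \<Longrightarrow> palv \<xi> \<Longrightarrow> palv (zt a \<xi> t)"
  by (induction t) (simp_all add: zt_def palv_mapply)

lemma zt_rec:
  assumes "mdet a = 1"
  shows "zt a \<xi> (Suc (Suc t)) = padd (sc (mtrace a) (zt a \<xi> (Suc t))) (zt a \<xi> t)"
  by (simp add: zt_Suc mapply_CH[OF assms])

lemma bezout_zt:
  assumes "mdet a = 1" "p * fst \<xi> + q * snd \<xi> = 1"
  shows "\<exists>p q. p * fst (zt a \<xi> t) + q * snd (zt a \<xi> t) = 1"
proof (induction t)
  case 0 then show ?case using assms(2) by (auto simp: zt_def)
next
  case (Suc t)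
  then obtain p q where pq: "p * fst (zt a \<xi> t) + q * snd (zt a \<xi> t) = 1" by blast
  have e: "zt a \<xi> t = mapply a (zt a \<xi> (Suc t))" by (simp add: zt_Suc mapply_adj2[OF assms(1)])
  obtain x y z w where a: "a = (x, y, z, w)" by (cases a) auto
  obtain v1 v2 where v: "zt a \<xi> (Suc t) = (v1, v2)" by (cases "zt a \<xi> (Suc t)") auto
  have pq': "p * fst (mapply a (v1, v2)) + q * snd (mapply a (v1, v2)) = 1" using pq e v by simp
  have "(p * x + q * z) * v1 + (p * y + q * w) * v2 = 1"
    using pq' by (simp add: a mapply_def algebra_simps)
  then show ?case unfolding v by auto
qed

lemma zt_nz:
  assumes "mdet a = 1" "p * fst \<xi> + q * snd \<xi> = 1"
  shows "zt a \<xi> t \<noteq> (0, 0)"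
  using bezout_zt[OF assms, of t] by auto

lemma mtrace_adj: "mtrace (adj a) = mtrace a"
  by (cases a) (simp add: adj_def mtrace_def add.commute)

lemma psupp_sc_ex: "x \<in> psupp (sc h z) \<Longrightarrow> \<exists>k\<in>ks h. \<exists>y\<in>psupp z. x = k + y"
  unfolding psupp_def sc_def using keys_mult_ex[of x h "fst z"] keys_mult_ex[of x h "snd z"] by auto

lemma psupp_zero_pair[simp]: "psupp (0, 0) = {}" by (simp add: psupp_def)

lemma psupp_sc_zero[simp]: "psupp (sc 0 z) = {}" by (simp add: sc_def)

lemma psupp_nonempty: "z \<noteq> (0, 0) \<Longrightarrow> psupp z \<noteq> {}"
  by (cases z) (auto simp: psupp_def)

lemma pal_key: "palindrome p \<Longrightarrow> x \<in> ks p \<Longrightarrow> - x \<in> ks p"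
  by (simp add: palindrome_def in_keys_iff)

lemma palv_psupp: "palv z \<Longrightarrow> x \<in> psupp z \<Longrightarrow> - x \<in> psupp z"
  by (auto simp: palv_def psupp_def pal_key)

lemma psupp_sc_bounds:
  assumes "palv z" "z \<noteq> (0, 0)" "h \<noteq> 0"
  shows "Max (ks h) + Max (psupp z) \<in> psupp (sc h z)" "Min (ks h) - Max (psupp z) \<in> psupp (sc h z)"
proof -
  let ?D = "Max (psupp z)"
  have ne: "psupp z \<noteq> {}" using psupp_nonempty assms(2) .
  have Din: "?D \<in> psupp z" using ne by simp
  have ub: "y \<le> ?D" if "y \<in> psupp z" for y using that by simp
  have lb: "- ?D \<le> y" if "y \<in> psupp z" for y using ub[OF palv_psupp[OF assms(1) that]] by simp
  have comp: "Max (ks h) + ?D \<in> ks (h * c) \<and> Min (ks h) - ?D \<in> ks (h * c)"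
    if c: "palindrome c" "?D \<in> ks c" "ks c \<subseteq> psupp z" for c
  proof -
    have cnz: "c \<noteq> 0" using c(2) by auto
    have "Max (ks c) = ?D" using c by (intro Max_eqI) (auto intro: ub)
    moreover have "Min (ks c) = - ?D" using c pal_key[OF c(1) c(2)] by (intro Min_eqI) (auto intro: lb)
    ultimately show ?thesis using max_key_mult[OF assms(3) cnz] min_key_mult[OF assms(3) cnz] by simp
  qed
  have "?D \<in> ks (fst z) \<or> ?D \<in> ks (snd z)" using Din by (simp add: psupp_def)
  then show "Max (ks h) + ?D \<in> psupp (sc h z)" "Min (ks h) - ?D \<in> psupp (sc h z)"
    using comp[of "fst z"] comp[of "snd z"] assms(1)
    by (auto simp: palv_def psupp_def sc_def)
qed

lemma ks_inj: "ks (p::lpoly) = ks q \<Longrightarrow> p = q"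
  by (rule poly_mapping_eqI) (metis in_keys_one not_in_keys_iff_lookup_eq_zero)

definition sympairs :: "(lpoly \<Rightarrow> lpoly \<Rightarrow> bit) \<Rightarrow> lpoly set \<Rightarrow> nat \<Rightarrow> (nat \<Rightarrow> lpoly) \<Rightarrow> (nat \<Rightarrow> lpoly) \<Rightarrow> bool" where
  "sympairs \<beta> V n e f \<longleftrightarrow> (\<forall>i<n. e i \<in> V \<and> f i \<in> V \<and> \<beta> (e i) (f i) = 1) \<and>
     (\<forall>i<n. \<forall>j<n. i \<noteq> j \<longrightarrow> \<beta> (e i) (e j) = 0 \<and> \<beta> (e i) (f j) = 0 \<and> \<beta> (f i) (e j) = 0 \<and> \<beta> (f i) (f j) = 0)"

lemma symp_basis:
  fixes \<beta> :: "lpoly \<Rightarrow> lpoly \<Rightarrow> bit"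
  assumes add: "\<And>x y w. \<beta> (x + y) w = \<beta> x w + \<beta> y w"
    and sym: "\<And>x y. \<beta> x y = \<beta> y x"
    and alt: "\<And>x. \<beta> x x = 0"
  shows "finite V \<Longrightarrow> 0 \<in> V \<Longrightarrow> (\<forall>x\<in>V. \<forall>y\<in>V. x + y \<in> V) \<Longrightarrow>
    (\<forall>v\<in>V. (\<forall>w\<in>V. \<beta> v w = 0) \<longrightarrow> v = 0) \<Longrightarrow> \<exists>n e f. card V = 4 ^ n \<and> sympairs \<beta> V n e f"
proof (induction "card V" arbitrary: V rule: less_induct)
  case less
  note fin = less.prems(1) and zV = less.prems(2) and cl = less.prems(3) and nd = less.prems(4)
  have b0: "\<beta> 0 w = 0" for w using add[of 0 0 w] by simp
  have b0': "\<beta> w 0 = 0" for w using b0 sym by metis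
  have add2: "\<beta> w (x + y) = \<beta> w x + \<beta> w y" for w x y using add sym by metis
  show ?case
  proof (cases "V = {0}")
    case True
    then show ?thesis by (rule_tac x=0 in exI) (simp add: sympairs_def)
  next
    case False
    then obtain e where eV: "e \<in> V" and enz: "e \<noteq> 0" using zV by blast
    then obtain f where fV: "f \<in> V" and ef: "\<beta> e f = 1" using nd by (metis bit_not_zero_iff)
    have fe: "\<beta> f e = 1" using ef sym by metis
    define V' where "V' = {v\<in>V. \<beta> v e = 0 \<and> \<beta> v f = 0}"
    have V'V: "V' \<subseteq> V" unfolding V'_def by blast
    have eV': "e \<notin> V'" using ef unfolding V'_def by simp
    have card_lt: "card V' < card V" using fin V'V eV eV' by (intro psubset_card_mono) auto
    have fin': "finite V'" using fin V'V finite_subset by blast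
    have z': "0 \<in> V'" using zV b0 unfolding V'_def by simp
    have cl': "\<forall>x\<in>V'. \<forall>y\<in>V'. x + y \<in> V'" using cl add unfolding V'_def by simp
    define pr where "pr x = x + (if \<beta> x f = 1 then e else 0) + (if \<beta> x e = 1 then f else 0)" for x
    have prV: "pr x \<in> V" if "x \<in> V" for x
      using that cl eV fV zV unfolding pr_def by auto
    have prV': "pr x \<in> V'" if "x \<in> V" for x
    proof -
      have "\<beta> (pr x) e = 0" unfolding pr_def add by (cases "\<beta> x e"; cases "\<beta> x f") (simp_all add: b0 alt fe)
      moreover have "\<beta> (pr x) f = 0" unfolding pr_def add by (cases "\<beta> x e"; cases "\<beta> x f") (simp_all add: b0 alt ef)
      ultimately show ?thesis using prV[OF that] unfolding V'_def by simp
    qed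
    have prx: "x = pr x + (if \<beta> x f = 1 then e else 0) + (if \<beta> x e = 1 then f else 0)" for x
      unfolding pr_def by (simp add: add.assoc)
    have nd': "\<forall>v\<in>V'. (\<forall>w\<in>V'. \<beta> v w = 0) \<longrightarrow> v = 0"
    proof (intro ballI impI)
      fix v assume vV': "v \<in> V'" and h: "\<forall>w\<in>V'. \<beta> v w = 0"
      have ve: "\<beta> v e = 0" and vf: "\<beta> v f = 0" using vV' unfolding V'_def by auto
      have "\<forall>x\<in>V. \<beta> v x = 0"
      proof
        fix x assume "x \<in> V"
        then have "\<beta> v (pr x) = 0" using h prV' by blast
        moreover have "\<beta> v x = \<beta> v (pr x + (if \<beta> x f = 1 then e else 0) + (if \<beta> x e = 1 then f else 0))"
          by (rule arg_cong[where f="\<beta> v"]) (rule prx)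
        ultimately show "\<beta> v x = 0" by (simp add: add2 ve vf b0' split: if_split)
      qed
      then show "v = 0" using nd vV' V'V by blast
    qed
    obtain m e' f' where m: "card V' = 4 ^ m" "sympairs \<beta> V' m e' f'"
      using less.hyps[OF card_lt fin' z' cl' nd'] by blast
    define g where "g = (\<lambda>(v, a::bool, b::bool). v + (if a then e else 0) + (if b then f else 0))"
    have bij: "bij_betw g (V' \<times> UNIV \<times> UNIV) V"
    proof (rule bij_betw_imageI)
      show "inj_on g (V' \<times> UNIV \<times> UNIV)"
      proof (rule inj_onI)
        fix x y assume x: "x \<in> V' \<times> UNIV \<times> UNIV" and y: "y \<in> V' \<times> UNIV \<times> UNIV" and eq0: "g x = g y"
        obtain v a b where xv: "x = (v, a, b)" by (cases x) auto
        obtain v' a' b' where yv: "y = (v', a', b')" by (cases y) auto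
        have v: "v \<in> V'" and v': "v' \<in> V'" using x y xv yv by auto
        have eq: "g (v, a, b) = g (v', a', b')" using eq0 xv yv by simp
        have vs: "\<beta> v e = 0" "\<beta> v f = 0" "\<beta> v' e = 0" "\<beta> v' f = 0" using v v' unfolding V'_def by auto
        have "\<beta> (g (v, a, b)) f = (if a then 1 else 0)"
          unfolding g_def using vs by (simp add: add ef alt b0)
        moreover have "\<beta> (g (v', a', b')) f = (if a' then 1 else 0)"
          unfolding g_def using vs by (simp add: add ef alt b0)
        ultimately have aa: "a = a'" using eq by (simp split: if_splits)
        have "\<beta> (g (v, a, b)) e = (if b then 1 else 0)"
          unfolding g_def using vs by (simp add: add fe alt b0)
        moreover have "\<beta> (g (v', a', b')) e = (if b' then 1 else 0)"
          unfolding g_def using vs by (simp add: add fe alt b0)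
        ultimately have bb: "b = b'" using eq by (simp split: if_splits)
        show "x = y" using eq aa bb xv yv unfolding g_def by simp
      qed
      show "g ` (V' \<times> UNIV \<times> UNIV) = V"
      proof
        show "g ` (V' \<times> UNIV \<times> UNIV) \<subseteq> V"
          using V'V cl eV fV zV unfolding g_def by auto
        show "V \<subseteq> g ` (V' \<times> UNIV \<times> UNIV)"
        proof
          fix x assume "x \<in> V"
          then have "x = g (pr x, \<beta> x f = 1, \<beta> x e = 1)" "pr x \<in> V'"
            using prx[of x] prV' unfolding g_def by auto
          then show "x \<in> g ` (V' \<times> UNIV \<times> UNIV)" by blast
        qed
      qed
    qed
    have "card V = card (V' \<times> (UNIV::bool set) \<times> (UNIV::bool set))"
      using bij_betw_same_card[OF bij] by simp
    also have "\<dots> = card V' * 4" by (simp add: card_cartesian_product)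
    finally have cV: "card V = 4 ^ Suc m" using m(1) by simp
    define E where "E i = (if i = 0 then e else e' (i - 1))" for i
    define F where "F i = (if i = 0 then f else f' (i - 1))" for i
    have sp: "sympairs \<beta> V (Suc m) E F"
      unfolding sympairs_def
    proof (rule conjI)
      show "\<forall>i<Suc m. E i \<in> V \<and> F i \<in> V \<and> \<beta> (E i) (F i) = 1"
      proof (intro allI impI)
      fix i assume i: "i < Suc m"
      show "E i \<in> V \<and> F i \<in> V \<and> \<beta> (E i) (F i) = 1"
        using m(2) i eV fV ef V'V unfolding E_def F_def sympairs_def
        by (cases i) auto
      qed
    next
      show "\<forall>i<Suc m. \<forall>j<Suc m. i \<noteq> j \<longrightarrow> \<beta> (E i) (E j) = 0 \<and> \<beta> (E i) (F j) = 0 \<and> \<beta> (F i) (E j) = 0 \<and> \<beta> (F i) (F j) = 0"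
      proof (intro allI impI)
      fix i j assume i: "i < Suc m" and j: "j < Suc m" and ij: "i \<noteq> j"
      have in': "e' k \<in> V' \<and> f' k \<in> V'" if "k < m" for k using m(2) that unfolding sympairs_def by blast
      have orth: "\<beta> (e' k) e = 0 \<and> \<beta> (e' k) f = 0 \<and> \<beta> (f' k) e = 0 \<and> \<beta> (f' k) f = 0" if "k < m" for k
        using in'[OF that] unfolding V'_def by blast
      show "\<beta> (E i) (E j) = 0 \<and> \<beta> (E i) (F j) = 0 \<and> \<beta> (F i) (E j) = 0 \<and> \<beta> (F i) (F j) = 0"
      proof (cases "i = 0")
        case True
        then have "j \<noteq> 0" "j - 1 < m" using ij j by auto
        then show ?thesis using True orth[of "j - 1"] sym[of e "e' (j-1)"] sym[of e "f' (j-1)"]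
            sym[of f "e' (j-1)"] sym[of f "f' (j-1)"] unfolding E_def F_def by simp
      next
        case False
        show ?thesis
        proof (cases "j = 0")
          case True
          have "i - 1 < m" using i False by simp
          then show ?thesis using True False orth[of "i - 1"] unfolding E_def F_def by simp
        next
          case False': False
          have h: "\<forall>i<m. \<forall>j<m. i \<noteq> j \<longrightarrow> \<beta> (e' i) (e' j) = 0 \<and> \<beta> (e' i) (f' j) = 0 \<and> \<beta> (f' i) (e' j) = 0 \<and> \<beta> (f' i) (f' j) = 0"
            using m(2) unfolding sympairs_def by blast
          have "i - 1 < m" "j - 1 < m" "i - 1 \<noteq> j - 1" using i j ij False False' by auto
          then show ?thesis using h False False' unfolding E_def F_def by simp
        qed
      qed
      qed
    qed
    show ?thesis using cV sp by blast
  qed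
qed

lemma D_nonneg: "palv z \<Longrightarrow> z \<noteq> (0, 0) \<Longrightarrow> 0 \<le> Max (psupp z)"
proof -
  assume p: "palv z" and nz: "z \<noteq> (0, 0)"
  have ne: "psupp z \<noteq> {}" using psupp_nonempty nz .
  then have "Max (psupp z) \<in> psupp z" by simp
  then have "- Max (psupp z) \<in> psupp z" using palv_psupp p by blast
  then have "- Max (psupp z) \<le> Max (psupp z)" by (rule Max_ge[OF finite_psupp])
  then show ?thesis by simp
qed

lemma psupp_sc_le: "x \<in> psupp (sc h z) \<Longrightarrow> (\<forall>k\<in>ks h. k \<le> K) \<Longrightarrow> x \<le> K + Max (psupp z)"
proof -
  assume x: "x \<in> psupp (sc h z)" and k: "\<forall>k\<in>ks h. k \<le> K"
  obtain a y where "a \<in> ks h" "y \<in> psupp z" "x = a + y" using psupp_sc_ex[OF x] by blast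
  moreover have "y \<le> Max (psupp z)" using \<open>y \<in> psupp z\<close> by simp
  moreover have "a \<le> K" using k \<open>a \<in> ks h\<close> by blast
  ultimately show ?thesis by linarith
qed

lemma psupp_sc_ge: "palv z \<Longrightarrow> x \<in> psupp (sc h z) \<Longrightarrow> (\<forall>k\<in>ks h. K \<le> k) \<Longrightarrow> K - Max (psupp z) \<le> x"
proof -
  assume p: "palv z" and x: "x \<in> psupp (sc h z)" and k: "\<forall>k\<in>ks h. K \<le> k"
  obtain a y where "a \<in> ks h" "y \<in> psupp z" "x = a + y" using psupp_sc_ex[OF x] by blast
  moreover have "- y \<le> Max (psupp z)" using palv_psupp[OF p \<open>y \<in> psupp z\<close>] by simp
  moreover have "K \<le> a" using k \<open>a \<in> ks h\<close> by blast
  ultimately show ?thesis by linarith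
qed

lemma symp_sc_0: "symp_on A (sc 0 z) w = 0"
  by (rule symp_on_disj) simp

lemma symp_sc_add: "symp_on A (sc (f + g) z) w = symp_on A (sc f z) w + symp_on A (sc g z) w"
  by (simp add: sc_add symp_on_padd)

lemma symp_sc_sum: "symp_on A (sc (sum F P) z) w = (\<Sum>j\<in>P. symp_on A (sc (F j) z) w)"
proof (cases "finite P")
  case True
  then show ?thesis by (induction P rule: finite_induct) (simp_all add: symp_sc_0 symp_sc_add)
next
  case False
  then show ?thesis by (simp add: symp_sc_0)
qed

lemma lp_restr_split:
  assumes "lo \<le> hi" "\<forall>k. lo \<le> k \<and> k < hi \<longrightarrow> k \<notin> ks d"
  shows "d = restr {..<lo} d + restr {hi..} d"
proof (rule poly_mapping_eqI)
  fix k
  show "lk d k = lk (restr {..<lo} d + restr {hi..} d) k"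
  proof (cases "k < lo")
    case True
    then have "\<not> hi \<le> k" using assms(1) by simp
    then show ?thesis using True by (simp add: lookup_add)
  next
    case False
    show ?thesis
    proof (cases "k < hi")
      case True
      then have "lk d k = 0" using assms(2) False by (simp add: in_keys_iff)
      then show ?thesis using False True by (simp add: lookup_add)
    next
      case False': False
      then show ?thesis using False by (simp add: lookup_add)
    qed
  qed
qed

lemma ent_upper:
  assumes pz: "palv z" and nz: "z \<noteq> (0, 0)" and ep: "ent_pairs c (range (\<lambda>f. sc f z)) n"
  shows "n \<le> nat (Max (psupp z))"
proof -
  let ?S = "range (\<lambda>f. sc f z)" and ?D = "Max (psupp z)" and ?A = "{..<c}"
  obtain e1 e2 where
    inS: "\<forall>i<n. e1 i \<in> ?S \<and> e2 i \<in> ?S" and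
    strad: "\<forall>i<n. psupp (e1 i) \<inter> {..<c} \<noteq> {} \<and> psupp (e1 i) \<inter> {c..} \<noteq> {} \<and>
            psupp (e2 i) \<inter> {..<c} \<noteq> {} \<and> psupp (e2 i) \<inter> {c..} \<noteq> {}" and
    one: "\<forall>i<n. symp_on ?A (e1 i) (e2 i) = 1" and
    cross: "\<forall>i<n. \<forall>j<n. i \<noteq> j \<longrightarrow>
        symp_on ?A (e1 i) (e1 j) = 0 \<and> symp_on ?A (e1 i) (e2 j) = 0 \<and>
        symp_on ?A (e2 i) (e1 j) = 0 \<and> symp_on ?A (e2 i) (e2 j) = 0" and
    loc: "\<forall>i<n. \<forall>g\<in>?S. psupp g \<subseteq> ?A \<longrightarrow> symp_on ?A (e1 i) g = 0 \<and> symp_on ?A (e2 i) g = 0"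
    using ep unfolding ent_pairs_def by (elim exE conjE) (rule that)
  have "\<forall>i. \<exists>f. i < n \<longrightarrow> e1 i = sc f z" using inS by blast
  then obtain F where F: "\<forall>i. i < n \<longrightarrow> e1 i = sc (F i) z" by (rule choice[THEN exE]) blast
  have "\<forall>i. \<exists>f. i < n \<longrightarrow> e2 i = sc f z" using inS by blast
  then obtain G where G: "\<forall>i. i < n \<longrightarrow> e2 i = sc (G i) z" by (rule choice[THEN exE]) blast
  define C where "C P Q = sum F P + sum G Q" for P Q
  define W where "W = {c - ?D..<c + ?D}"
  define \<Phi> where "\<Phi> PQ = ks (C (fst PQ) (snd PQ)) \<inter> W" for PQ
  have K1: "symp_on ?A (sc (C P Q) z) (e2 i) = (if i \<in> P then 1 else 0) \<and>
            symp_on ?A (sc (C P Q) z) (e1 i) = (if i \<in> Q then 1 else 0)"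
    if P: "P \<subseteq> {..<n}" and Q: "Q \<subseteq> {..<n}" and i: "i < n" for P Q i
  proof -
    have fP: "finite P" and fQ: "finite Q" using P Q finite_subset by auto
    have a1: "(\<Sum>j\<in>P. symp_on ?A (sc (F j) z) (e2 i)) = (\<Sum>j\<in>P. if j = i then 1 else 0)"
    proof (rule sum.cong[OF refl])
      fix j assume "j \<in> P" then have j: "j < n" using P by auto
      have ej: "sc (F j) z = e1 j" using F j by simp
      show "symp_on ?A (sc (F j) z) (e2 i) = (if j = i then 1 else 0)"
      proof (cases "j = i")
        case True then show ?thesis using ej one i by simp
      next
        case False then show ?thesis using ej cross i j by simp
      qed
    qed
    have a2: "(\<Sum>j\<in>Q. symp_on ?A (sc (G j) z) (e2 i)) = 0"
    proof (rule sum.neutral, rule ballI)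
      fix j assume "j \<in> Q" then have j: "j < n" using Q by auto
      have ej: "sc (G j) z = e2 j" using G j by simp
      show "symp_on ?A (sc (G j) z) (e2 i) = 0"
      proof (cases "j = i")
        case True then show ?thesis using ej symp_on_self by simp
      next
        case False then show ?thesis using ej cross i j by simp
      qed
    qed
    have a3: "(\<Sum>j\<in>P. symp_on ?A (sc (F j) z) (e1 i)) = 0"
    proof (rule sum.neutral, rule ballI)
      fix j assume "j \<in> P" then have j: "j < n" using P by auto
      have ej: "sc (F j) z = e1 j" using F j by simp
      show "symp_on ?A (sc (F j) z) (e1 i) = 0"
      proof (cases "j = i")
        case True then show ?thesis using ej symp_on_self by simp
      next
        case False then show ?thesis using ej cross i j by simp
      qed
    qed
    have a4: "(\<Sum>j\<in>Q. symp_on ?A (sc (G j) z) (e1 i)) = (\<Sum>j\<in>Q. if j = i then 1 else 0)"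
    proof (rule sum.cong[OF refl])
      fix j assume "j \<in> Q" then have j: "j < n" using Q by auto
      have ej: "sc (G j) z = e2 j" using G j by simp
      show "symp_on ?A (sc (G j) z) (e1 i) = (if j = i then 1 else 0)"
      proof (cases "j = i")
        case True then show ?thesis using ej one i symp_on_sym[of ?A "e2 i" "e1 i"] by simp
      next
        case False then show ?thesis using ej cross i j by simp
      qed
    qed
    show ?thesis
      unfolding C_def symp_sc_add symp_sc_sum a1 a2 a3 a4 using fP fQ by simp
  qed
  have K2: "symp_on ?A (sc d z) (e2 i) = 0 \<and> symp_on ?A (sc d z) (e1 i) = 0"
    if d: "ks d \<inter> W = {}" and i: "i < n" for d i
  proof -
    define lo where "lo = restr {..<c - ?D} d"
    define hi where "hi = restr {c + ?D..} d"
    have "d = lo + hi" unfolding lo_def hi_def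
      by (rule lp_restr_split) (use d D_nonneg[OF pz nz] in \<open>auto simp: W_def\<close>)
    then have dec: "sc d z = padd (sc lo z) (sc hi z)" by (simp add: sc_add)
    have khi: "\<forall>k\<in>ks hi. c + ?D \<le> k" unfolding hi_def by (auto simp: in_keys_iff split: if_splits)
    have klo: "\<forall>k\<in>ks lo. k \<le> c - ?D - 1" unfolding lo_def by (auto simp: in_keys_iff split: if_splits)
    have phi: "?A \<inter> psupp (sc hi z) = {}"
    proof -
      have "x \<ge> c" if "x \<in> psupp (sc hi z)" for x
        using psupp_sc_ge[OF pz that khi] by simp
      then show ?thesis by force
    qed
    have plo: "psupp (sc lo z) \<subseteq> ?A"
    proof
      fix x assume "x \<in> psupp (sc lo z)"
      then have "x \<le> c - ?D - 1 + ?D" using psupp_sc_le klo by blast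
      then show "x \<in> ?A" by simp
    qed
    have "sc lo z \<in> ?S" by blast
    then have l: "symp_on ?A (e1 i) (sc lo z) = 0" "symp_on ?A (e2 i) (sc lo z) = 0"
      using loc i plo by blast+
    have h0: "symp_on ?A (sc hi z) w = 0" for w using symp_on_disj[OF phi] .
    have l': "symp_on ?A (sc lo z) (e1 i) = 0" "symp_on ?A (sc lo z) (e2 i) = 0"
      using l symp_on_sym[of ?A "sc lo z" "e1 i"] symp_on_sym[of ?A "sc lo z" "e2 i"] by simp_all
    show ?thesis unfolding dec symp_on_padd using h0 l' by simp
  qed
  have inj: "inj_on \<Phi> (Pow {..<n} \<times> Pow {..<n})"
  proof (rule inj_onI)
    fix x y assume x: "x \<in> Pow {..<n} \<times> Pow {..<n}" and y: "y \<in> Pow {..<n} \<times> Pow {..<n}"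
      and eq: "\<Phi> x = \<Phi> y"
    obtain P Q where xPQ: "x = (P, Q)" by (cases x) auto
    obtain P' Q' where yPQ: "y = (P', Q')" by (cases y) auto
    have sub: "P \<subseteq> {..<n}" "Q \<subseteq> {..<n}" "P' \<subseteq> {..<n}" "Q' \<subseteq> {..<n}" using x y xPQ yPQ by auto
    define d where "d = C P Q + C P' Q'"
    have kd: "ks d \<inter> W = {}"
    proof (rule ccontr)
      assume "ks d \<inter> W \<noteq> {}"
      then obtain k where k: "k \<in> ks d" "k \<in> W" by blast
      have "ks (C P Q) \<inter> W = ks (C P' Q') \<inter> W" using eq xPQ yPQ unfolding \<Phi>_def by simp
      then have "k \<in> ks (C P Q) \<longleftrightarrow> k \<in> ks (C P' Q')" using k(2) by blast
      then have "lk (C P Q) k = lk (C P' Q') k"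
        by (cases "lk (C P Q) k"; cases "lk (C P' Q') k") (auto simp: in_keys_iff)
      then have "lk d k = 0" by (simp add: d_def lookup_add)
      then show False using k(1) by (simp add: in_keys_iff)
    qed
    have "P = P' \<and> Q = Q'"
    proof -
      have "i \<in> P \<longleftrightarrow> i \<in> P'" if i: "i < n" for i
      proof -
        have "0 = symp_on ?A (sc d z) (e2 i)" using K2[OF kd i] by simp
        also have "\<dots> = (if i \<in> P then 1 else 0) + (if i \<in> P' then 1 else 0)"
          using K1[OF sub(1,2) i] K1[OF sub(3,4) i] unfolding d_def symp_sc_add by simp
        finally show ?thesis by (auto split: if_splits)
      qed
      moreover have "i \<in> Q \<longleftrightarrow> i \<in> Q'" if i: "i < n" for i
      proof -
        have "0 = symp_on ?A (sc d z) (e1 i)" using K2[OF kd i] by simp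
        also have "\<dots> = (if i \<in> Q then 1 else 0) + (if i \<in> Q' then 1 else 0)"
          using K1[OF sub(1,2) i] K1[OF sub(3,4) i] unfolding d_def symp_sc_add by simp
        finally show ?thesis by (auto split: if_splits)
      qed
      ultimately show ?thesis using sub by blast
    qed
    then show "x = y" using xPQ yPQ by simp
  qed
  have img: "\<Phi> ` (Pow {..<n} \<times> Pow {..<n}) \<subseteq> Pow W" unfolding \<Phi>_def by auto
  have "card (Pow {..<n} \<times> Pow {..<n}) \<le> card (Pow W)"
    by (rule card_inj_on_le[OF inj img]) (simp add: W_def)
  moreover have "card (Pow {..<n} \<times> Pow {..<n}) = 2 ^ (n + n)"
    by (simp add: card_cartesian_product card_Pow power_add)
  moreover have "card (Pow W) = 2 ^ nat (2 * ?D)"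
    by (simp add: card_Pow W_def)
  ultimately have "(2::nat) ^ (n + n) \<le> 2 ^ nat (2 * ?D)" by simp
  then have "n + n \<le> nat (2 * ?D)" by (rule power_le_imp_le_exp[rotated]) simp
  then show ?thesis by simp
qed

definition mkp :: "int set \<Rightarrow> lpoly" where
  "mkp K = Abs_poly_mapping (\<lambda>k. if k \<in> K then 1 else 0)"

lemma keys_mkp: "finite K \<Longrightarrow> ks (mkp K) = K"
proof -
  assume "finite K"
  moreover have "{k. (if k \<in> K then 1 else 0) \<noteq> (0::bit)} = K" by auto
  ultimately have "lk (mkp K) k = (if k \<in> K then 1 else 0)" for k by (simp add: mkp_def)
  then show ?thesis by (auto simp: in_keys_iff split: if_splits)
qed

lemma nondeg:
  assumes pz: "palv z" and bez: "p * fst z + q * snd z = 1"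
    and fW: "ks f \<subseteq> {c - Max (psupp z)..<c + Max (psupp z)}"
    and orth: "\<forall>g. ks g \<subseteq> {c - Max (psupp z)..<c + Max (psupp z)} \<longrightarrow> symp_on {..<c} (sc f z) (sc g z) = 0"
  shows "f = 0"
proof (rule ccontr)
  assume fnz: "f \<noteq> 0"
  let ?D = "Max (psupp z)" and ?A = "{..<c}"
  have nz: "z \<noteq> (0, 0)" using bez by auto
  have pf: "palindrome (fst z)" "palindrome (snd z)" using pz by (auto simp: palv_def)
  have s1: "symp_on ?A (sc f z) (sc (mon k) z) = 0" for k
  proof (cases "c - ?D \<le> k \<and> k < c + ?D")
    case True
    then have "ks (mon k) \<subseteq> {c - ?D..<c + ?D}" by simp
    then show ?thesis by (rule orth[rule_format])
  next
    case False
    show ?thesis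
    proof (cases "k < c - ?D")
      case 1: True
      have "psupp (sc (mon k) z) \<subseteq> ?A"
      proof
        fix x assume x: "x \<in> psupp (sc (mon k) z)"
        have "\<forall>k'\<in>ks (mon k). k' \<le> k" by simp
        then have "x \<le> k + ?D" by (rule psupp_sc_le[OF x])
        then show "x \<in> ?A" using 1 by simp
      qed
      then have "symp_on ?A (sc (mon k) z) (sc f z) = symp_on UNIV (sc (mon k) z) (sc f z)"
        by (rule symp_on_sub)
      also have "\<dots> = 0" by (rule isotropic[OF pf])
      finally show ?thesis using symp_on_sym[of ?A "sc (mon k) z" "sc f z"] by simp
    next
      case 2: False
      then have 2: "c + ?D \<le> k" using False by simp
      have nin: "x \<notin> psupp (sc (mon k) z)" if "x \<in> ?A" for x
      proof
        assume x: "x \<in> psupp (sc (mon k) z)"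
        have "\<forall>k'\<in>ks (mon k). k \<le> k'" by simp
        then have "k - ?D \<le> x" by (rule psupp_sc_ge[OF pz x])
        then show False using 2 that by simp
      qed
      show ?thesis
      proof (rule symp_on_zeroA)
        fix x assume "x \<in> ?A"
        then show "lk (fst (sc (mon k) z)) x = 0 \<and> lk (snd (sc (mon k) z)) x = 0"
          using nin lookup_outside_psupp by blast
      qed
    qed
  qed
  define v where "v = rA ?A (sc f z)"
  have s2: "lk (fst v * snd z + snd v * fst z) k = 0" for k
    using s1[of k] symp_mon[OF pf, of v k] symp_on_rA[of ?A "sc f z" "sc (mon k) z"] unfolding v_def by simp
  have e0: "fst v * snd z + snd v * fst z = 0" by (rule poly_mapping_eqI) (simp add: s2)
  have e: "fst v * snd z = snd v * fst z" using e0 by (simp add: lp_add_cancel)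
  define h where "h = p * fst v + q * snd v"
  have v1: "fst v = h * fst z"
  proof -
    have "fst v = fst v * (p * fst z + q * snd z)" by (simp add: bez)
    also have "\<dots> = p * (fst v * fst z) + q * (fst v * snd z)" by (simp add: algebra_simps)
    also have "\<dots> = p * (fst v * fst z) + q * (snd v * fst z)" by (simp only: e)
    also have "\<dots> = h * fst z" by (simp add: h_def algebra_simps)
    finally show ?thesis .
  qed
  have v2: "snd v = h * snd z"
  proof -
    have "snd v = snd v * (p * fst z + q * snd z)" by (simp add: bez)
    also have "\<dots> = p * (snd v * fst z) + q * (snd v * snd z)" by (simp add: algebra_simps)
    also have "\<dots> = p * (fst v * snd z) + q * (snd v * snd z)" by (simp only: e)
    also have "\<dots> = h * snd z" by (simp add: h_def algebra_simps)
    finally show ?thesis .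
  qed
  have vsc: "v = sc h z" using v1 v2 by (simp add: sc_def prod_eq_iff)
  have hA: "psupp (sc h z) \<subseteq> ?A" using psupp_rA[of ?A "sc f z"] vsc unfolding v_def by simp
  have fhB: "x \<notin> psupp (sc (f + h) z)" if "x \<in> ?A" for x
  proof -
    have "lk (fst (sc (f + h) z)) x = lk (f * fst z) x + lk (fst v) x"
      by (simp add: sc_def v1 distrib_right lookup_add)
    also have "\<dots> = 0" using that by (simp add: v_def rA_def sc_def)
    finally have a: "lk (fst (sc (f + h) z)) x = 0" .
    have "lk (snd (sc (f + h) z)) x = lk (f * snd z) x + lk (snd v) x"
      by (simp add: sc_def v2 distrib_right lookup_add)
    also have "\<dots> = 0" using that by (simp add: v_def rA_def sc_def)
    finally have b: "lk (snd (sc (f + h) z)) x = 0" .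
    show ?thesis using a b by (simp add: psupp_def in_keys_iff)
  qed
  show False
  proof (cases "h = 0")
    case True
    have "Min (ks f) - ?D \<in> psupp (sc f z)" using psupp_sc_bounds(2)[OF pz nz fnz] .
    then have "\<not> Min (ks f) - ?D < c" using fhB[of "Min (ks f) - ?D"] True by auto
    moreover have "Min (ks f) < c + ?D" using Min_in_keys[OF fnz] fW by auto
    ultimately show False by simp
  next
    case False
    have "Max (ks h) + ?D \<in> psupp (sc h z)" using psupp_sc_bounds(1)[OF pz nz False] .
    then have mh: "Max (ks h) + ?D < c" using hA by auto
    let ?m = "Min (ks h)"
    have "?m \<le> Max (ks h)" using Min_in_keys[OF False] le_Max_keys by blast
    then have mlt: "?m < c - ?D" using mh by simp
    then have "?m \<notin> ks f" using fW by auto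
    moreover have "?m \<in> ks h" using Min_in_keys[OF False] .
    ultimately have mfh: "?m \<in> ks (f + h)" by (simp add: in_keys_iff lookup_add)
    then have fhnz: "f + h \<noteq> 0" by auto
    have "Min (ks (f + h)) - ?D \<in> psupp (sc (f + h) z)" using psupp_sc_bounds(2)[OF pz nz fhnz] .
    then have "\<not> Min (ks (f + h)) - ?D < c" using fhB by auto
    moreover have "Min (ks (f + h)) \<le> ?m" using mfh by simp
    moreover have "0 \<le> ?D" using D_nonneg[OF pz nz] .
    ultimately show False using mlt by simp
  qed
qed

lemma ent_lower:
  assumes pz: "palv z" and bez: "p * fst z + q * snd z = 1"
  shows "ent_pairs c (range (\<lambda>f. sc f z)) (nat (Max (psupp z)))"
proof -
  let ?D = "Max (psupp z)" and ?A = "{..<c}"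
  define W where "W = {c - ?D..<c + ?D}"
  define V where "V = {h. ks h \<subseteq> W}"
  define \<beta> where "\<beta> h g = symp_on ?A (sc h z) (sc g z)" for h g
  have nz: "z \<noteq> (0, 0)" using bez by auto
  have pf: "palindrome (fst z)" "palindrome (snd z)" using pz by (auto simp: palv_def)
  have finW: "finite W" by (simp add: W_def)
  have bijV: "bij_betw ks V (Pow W)"
  proof (rule bij_betw_imageI)
    show "inj_on ks V" by (rule inj_onI) (rule ks_inj)
    show "ks ` V = Pow W"
    proof
      show "ks ` V \<subseteq> Pow W" unfolding V_def by auto
      show "Pow W \<subseteq> ks ` V"
      proof
        fix K assume K: "K \<in> Pow W"
        then have fK: "finite K" using finW finite_subset by blast
        have "mkp K \<in> V" using K keys_mkp[OF fK] unfolding V_def by simp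
        moreover have "ks (mkp K) = K" using keys_mkp[OF fK] .
        ultimately show "K \<in> ks ` V" by force
      qed
    qed
  qed
  have finV: "finite V" using bij_betw_finite[OF bijV] finW by simp
  have "card W = nat (2 * ?D)" unfolding W_def by simp
  then have cardV: "card V = 2 ^ nat (2 * ?D)"
    using bij_betw_same_card[OF bijV] by (simp add: card_Pow finW)
  have zV: "0 \<in> V" unfolding V_def by simp
  have clV: "\<forall>x\<in>V. \<forall>y\<in>V. x + y \<in> V"
  proof (intro ballI)
    fix x y assume "x \<in> V" "y \<in> V"
    then have "ks x \<subseteq> W" "ks y \<subseteq> W" unfolding V_def by simp_all
    then have "ks (x + y) \<subseteq> W" using keys_add[of x y] by blast
    then show "x + y \<in> V" unfolding V_def by (rule CollectI)
  qed
  have ndV: "\<forall>v\<in>V. (\<forall>w\<in>V. \<beta> v w = 0) \<longrightarrow> v = 0"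
  proof (intro ballI impI)
    fix v assume v: "v \<in> V" and h: "\<forall>w\<in>V. \<beta> v w = 0"
    show "v = 0"
    proof (rule nondeg[OF pz bez])
      show "ks v \<subseteq> {c - ?D..<c + ?D}" using v unfolding V_def W_def by (rule CollectD)
      show "\<forall>g. ks g \<subseteq> {c - ?D..<c + ?D} \<longrightarrow> symp_on ?A (sc v z) (sc g z) = 0"
      proof (intro allI impI)
        fix g assume "ks g \<subseteq> {c - ?D..<c + ?D}"
        then have "g \<in> V" unfolding V_def W_def by (rule CollectI)
        then have "\<beta> v g = 0" using h by blast
        then show "symp_on ?A (sc v z) (sc g z) = 0" unfolding \<beta>_def .
      qed
    qed
  qed
  have add: "\<beta> (x + y) w = \<beta> x w + \<beta> y w" for x y w unfolding \<beta>_def by (rule symp_sc_add)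
  have sym: "\<beta> x y = \<beta> y x" for x y unfolding \<beta>_def by (rule symp_on_sym)
  have alt: "\<beta> x x = 0" for x unfolding \<beta>_def by (rule symp_on_self)
  have "\<exists>n E F. card V = 4 ^ n \<and> sympairs \<beta> V n E F"
    by (rule symp_basis[of \<beta> V, OF add sym alt finV zV clV ndV])
  then obtain n E F where nEF: "card V = 4 ^ n" "sympairs \<beta> V n E F" by (elim exE conjE)
  have "(2::nat) ^ (2 * n) = 2 ^ nat (2 * ?D)"
    using nEF(1) cardV by (simp add: power_mult)
  then have "2 * n = nat (2 * ?D)" by (rule power_inject_exp[THEN iffD1, rotated]) simp
  then have n: "n = nat ?D" by simp
  have pairs: "\<forall>i<n. E i \<in> V \<and> F i \<in> V \<and> \<beta> (E i) (F i) = 1"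
    and crossp: "\<forall>i<n. \<forall>j<n. i \<noteq> j \<longrightarrow> \<beta> (E i) (E j) = 0 \<and> \<beta> (E i) (F j) = 0 \<and> \<beta> (F i) (E j) = 0 \<and> \<beta> (F i) (F j) = 0"
    using nEF(2) unfolding sympairs_def by (rule conjunct1, rule conjunct2)
  have strad: "psupp (sc x z) \<inter> {..<c} \<noteq> {} \<and> psupp (sc x z) \<inter> {c..} \<noteq> {}"
    if "\<beta> x y = 1" for x y
  proof
    show "psupp (sc x z) \<inter> {..<c} \<noteq> {}"
    proof
      assume "psupp (sc x z) \<inter> {..<c} = {}"
      then have "\<beta> x y = 0" unfolding \<beta>_def by (intro symp_on_disj) blast
      then show False using that by simp
    qed
    show "psupp (sc x z) \<inter> {c..} \<noteq> {}"
    proof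
      assume "psupp (sc x z) \<inter> {c..} = {}"
      then have "psupp (sc x z) \<subseteq> ?A" by auto
      then have "\<beta> x y = symp_on UNIV (sc x z) (sc y z)" unfolding \<beta>_def by (rule symp_on_sub)
      also have "\<dots> = 0" by (rule isotropic[OF pf])
      finally show False using that by simp
    qed
  qed
  have locz: "symp_on ?A (sc x z) g = 0" if gS: "g \<in> range (\<lambda>f. sc f z)" and gA: "psupp g \<subseteq> ?A" for x g
  proof -
    obtain h where g: "g = sc h z" using gS by blast
    have "symp_on ?A (sc x z) g = symp_on ?A g (sc x z)" by (rule symp_on_sym)
    also have "\<dots> = symp_on UNIV g (sc x z)" by (rule symp_on_sub[OF gA])
    also have "\<dots> = 0" unfolding g by (rule isotropic[OF pf])
    finally show ?thesis .
  qed
  let ?e1 = "\<lambda>i. sc (E i) z" and ?e2 = "\<lambda>i. sc (F i) z"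
  have P1: "\<forall>i<n. ?e1 i \<in> range (\<lambda>f. sc f z) \<and> ?e2 i \<in> range (\<lambda>f. sc f z)" by blast
  have P2: "\<forall>i<n. psupp (?e1 i) \<inter> {..<c} \<noteq> {} \<and> psupp (?e1 i) \<inter> {c..} \<noteq> {} \<and>
            psupp (?e2 i) \<inter> {..<c} \<noteq> {} \<and> psupp (?e2 i) \<inter> {c..} \<noteq> {}"
  proof (intro allI impI)
    fix i assume i: "i < n"
    have b1: "\<beta> (E i) (F i) = 1" using pairs i by blast
    have b2: "\<beta> (F i) (E i) = 1" using b1 sym[of "F i" "E i"] by simp
    show "psupp (?e1 i) \<inter> {..<c} \<noteq> {} \<and> psupp (?e1 i) \<inter> {c..} \<noteq> {} \<and>
            psupp (?e2 i) \<inter> {..<c} \<noteq> {} \<and> psupp (?e2 i) \<inter> {c..} \<noteq> {}"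
      using strad[OF b1] strad[OF b2] by simp
  qed
  have P3: "\<forall>i<n. symp_on ?A (?e1 i) (?e2 i) = 1"
  proof (intro allI impI)
    fix i assume i: "i < n"
    have "\<beta> (E i) (F i) = 1" using pairs i by blast
    then show "symp_on ?A (?e1 i) (?e2 i) = 1" unfolding \<beta>_def .
  qed
  have P4: "\<forall>i<n. \<forall>j<n. i \<noteq> j \<longrightarrow>
        symp_on ?A (?e1 i) (?e1 j) = 0 \<and> symp_on ?A (?e1 i) (?e2 j) = 0 \<and>
        symp_on ?A (?e2 i) (?e1 j) = 0 \<and> symp_on ?A (?e2 i) (?e2 j) = 0"
  proof (intro allI impI)
    fix i j assume i: "i < n" and j: "j < n" and ij: "i \<noteq> j"
    have "\<beta> (E i) (E j) = 0 \<and> \<beta> (E i) (F j) = 0 \<and> \<beta> (F i) (E j) = 0 \<and> \<beta> (F i) (F j) = 0"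
      using crossp i j ij by blast
    then show "symp_on ?A (?e1 i) (?e1 j) = 0 \<and> symp_on ?A (?e1 i) (?e2 j) = 0 \<and>
        symp_on ?A (?e2 i) (?e1 j) = 0 \<and> symp_on ?A (?e2 i) (?e2 j) = 0" unfolding \<beta>_def .
  qed
  have P5: "\<forall>i<n. \<forall>g\<in>range (\<lambda>f. sc f z). psupp g \<subseteq> {..<c} \<longrightarrow>
        symp_on ?A (?e1 i) g = 0 \<and> symp_on ?A (?e2 i) g = 0"
  proof (intro allI impI ballI)
    fix i g assume "i < n" and g: "g \<in> range (\<lambda>f. sc f z)" and gA: "psupp g \<subseteq> {..<c}"
    show "symp_on ?A (?e1 i) g = 0 \<and> symp_on ?A (?e2 i) g = 0"
      using locz[OF g gA] by simp
  qed
  show ?thesis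
    unfolding ent_pairs_def n[symmetric]
    by (rule exI[of _ ?e1], rule exI[of _ ?e2]) (intro conjI P1 P2 P3 P4 P5)
qed

lemma ent_value:
  assumes pz: "palv z" and bez: "p * fst z + q * snd z = 1"
  shows "entanglement c (range (\<lambda>f. sc f z)) = enat (nat (Max (psupp z)))"
proof -
  have nz: "z \<noteq> (0, 0)" using bez by auto
  let ?N = "{n. ent_pairs c (range (\<lambda>f. sc f z)) n}"
  have "Sup (enat ` ?N) \<le> enat (nat (Max (psupp z)))"
  proof (rule Sup_least)
    fix x assume "x \<in> enat ` ?N"
    then obtain m where "x = enat m" "ent_pairs c (range (\<lambda>f. sc f z)) m" by blast
    then show "x \<le> enat (nat (Max (psupp z)))" using ent_upper[OF pz nz] by simp
  qed
  moreover have "enat (nat (Max (psupp z))) \<le> Sup (enat ` ?N)"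
    by (rule Sup_upper) (use ent_lower[OF pz bez, of c] in blast)
  ultimately show ?thesis unfolding entanglement_def by (rule antisym)
qed

lemma growth_bound:
  fixes D :: "nat \<Rightarrow> int" and d :: int
  assumes d0: "0 \<le> d" and Dpos: "\<And>t. 0 \<le> D t"
    and rec1: "\<And>t. D (Suc (Suc t)) \<le> max (d + D (Suc t)) (D t)"
    and rec2: "\<And>t. 0 < d \<Longrightarrow> D t < d + D (Suc t) \<Longrightarrow> D (Suc (Suc t)) = d + D (Suc t)"
  shows "\<exists>M T. \<forall>t\<ge>T. \<bar>D t - d * int t\<bar> \<le> M"
proof (cases "d = 0")
  case True
  define C where "C = max (D 0) (D 1)"
  have up: "D t \<le> C \<and> D (Suc t) \<le> C" for t
  proof (induction t)
    case 0 then show ?case by (simp add: C_def)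
  next
    case (Suc t)
    then show ?case using rec1[of t] True by (auto simp: max_def split: if_splits)
  qed
  show ?thesis
  proof (intro exI allI impI)
    fix t :: nat assume "0 \<le> t"
    show "\<bar>D t - d * int t\<bar> \<le> C" using up[of t] Dpos[of t] True by simp
  qed
next
  case False
  then have dpos: "0 < d" using d0 by simp
  have "\<exists>t0. D t0 < d + D (Suc t0)"
  proof (rule ccontr)
    assume "\<not> ?thesis"
    then have "d + D (Suc t) \<le> D t" for t by (simp add: not_less)
    then have dec: "D (Suc t) \<le> D t - d" for t by (simp add: algebra_simps)
    have "D t \<le> D 0 - int t" for t
    proof (induction t)
      case 0 then show ?case by simp
    next
      case (Suc t) then show ?case using dec[of t] dpos by simp
    qed
    from this[of "nat (D 0) + 1"] have "D (nat (D 0) + 1) < 0" using Dpos[of 0] by simp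
    then show False using Dpos[of "nat (D 0) + 1"] by simp
  qed
  then obtain t0 where g0: "D t0 < d + D (Suc t0)" by blast
  have lin: "D (t0 + s) < d + D (Suc (t0 + s)) \<and> D (Suc (t0 + s)) = D (Suc t0) + d * int s" for s
  proof (induction s)
    case 0 then show ?case using g0 by simp
  next
    case (Suc s)
    then have "D (Suc (Suc (t0 + s))) = d + D (Suc (t0 + s))" using rec2[OF dpos] by blast
    then show ?case using Suc dpos by (simp add: algebra_simps)
  qed
  show ?thesis
  proof (intro exI allI impI)
    fix t assume t: "Suc t0 \<le> t"
    then obtain s where ts: "t = Suc (t0 + s)" by (metis add_Suc le_iff_add)
    have "D t = D (Suc t0) + d * int s" using lin[of s] ts by simp
    then have "D t - d * int t = D (Suc t0) - d * int (Suc t0)" using ts by (simp add: algebra_simps)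
    then show "\<bar>D t - d * int t\<bar> \<le> \<bar>D (Suc t0) - d * int (Suc t0)\<bar>" by simp
  qed
qed

lemma lim_from_bound:
  fixes D :: "nat \<Rightarrow> int" and d :: int
  assumes "\<exists>M T. \<forall>t\<ge>T. \<bar>D t - d * int t\<bar> \<le> M"
  shows "(\<lambda>t. real_of_int (D t) / real t) \<longlonglongrightarrow> real_of_int d"
proof -
  obtain M T where MT: "\<forall>t\<ge>T. \<bar>D t - d * int t\<bar> \<le> M" using assms by blast
  have ev: "eventually (\<lambda>t. real_of_int d - real_of_int M / real t \<le> real_of_int (D t) / real t \<and>
       real_of_int (D t) / real t \<le> real_of_int d + real_of_int M / real t) sequentially"
    unfolding eventually_sequentially
  proof (intro exI allI impI)
    fix t assume t: "max T 1 \<le> t"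
    then have tpos: "0 < real t" by simp
    have b: "\<bar>D t - d * int t\<bar> \<le> M" using MT t by simp
    then have i1: "D t \<le> d * int t + M" and i2: "d * int t - M \<le> D t" by (simp_all add: abs_le_iff)
    have b1: "real_of_int (D t) \<le> real_of_int d * real t + real_of_int M"
      using i1 by (metis of_int_le_iff of_int_add of_int_mult of_int_of_nat_eq)
    have b2: "real_of_int d * real t - real_of_int M \<le> real_of_int (D t)"
      using i2 by (metis of_int_le_iff of_int_diff of_int_mult of_int_of_nat_eq)
    have "real_of_int d - real_of_int M / real t = (real_of_int d * real t - real_of_int M) / real t"
      using tpos by (simp add: field_simps)
    also have "\<dots> \<le> real_of_int (D t) / real t" using b2 tpos by (simp add: divide_right_mono)
    finally have l: "real_of_int d - real_of_int M / real t \<le> real_of_int (D t) / real t" .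
    have "real_of_int (D t) / real t \<le> (real_of_int d * real t + real_of_int M) / real t"
      using b1 tpos by (simp add: divide_right_mono)
    also have "\<dots> = real_of_int d + real_of_int M / real t"
      using tpos by (simp add: field_simps)
    finally have r: "real_of_int (D t) / real t \<le> real_of_int d + real_of_int M / real t" .
    show "real_of_int d - real_of_int M / real t \<le> real_of_int (D t) / real t \<and>
       real_of_int (D t) / real t \<le> real_of_int d + real_of_int M / real t" using l r by simp
  qed
  have l1: "(\<lambda>t. real_of_int d - real_of_int M / real t) \<longlonglongrightarrow> real_of_int d - 0"
    by (intro tendsto_diff tendsto_const lim_const_over_n)
  have l2: "(\<lambda>t. real_of_int d + real_of_int M / real t) \<longlonglongrightarrow> real_of_int d + 0"
    by (intro tendsto_add tendsto_const lim_const_over_n)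
  show ?thesis
    by (rule tendsto_sandwich[OF _ _ l1[simplified] l2[simplified]])
       (use ev in \<open>auto elim: eventually_mono\<close>)
qed

lemma ldeg_pos:
  assumes "0 < ldeg p"
  shows "p \<noteq> 0 \<and> Max (ks p) = ldeg p"
proof -
  have ne: "ks p \<noteq> {}"
  proof
    assume "ks p = {}"
    then have "ldeg p = 0" by (simp add: ldeg_def)
    then show False using assms by simp
  qed
  then have "p \<noteq> 0" by auto
  moreover have "ldeg p = max 0 (Max (ks p))" unfolding ldeg_def using ne by (simp add: Max_insert)
  ultimately show ?thesis using assms by simp
qed

lemma ldeg_ge: "k \<in> ks p \<Longrightarrow> k \<le> ldeg p"
  unfolding ldeg_def by (rule Max_ge) simp_all

lemma ldeg_nonneg: "0 \<le> ldeg p"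
  unfolding ldeg_def by (rule Max_ge) simp_all


theorem mainTheorem15:
  fixes a :: pmat and \<xi> :: pvec and c :: int
  assumes "centered a"
    and "palindrome (fst \<xi>)" and "palindrome (snd \<xi>)"
    and "lcoprime (fst \<xi>) (snd \<xi>)"
  shows "(\<forall>t. entanglement c (evolved_stab a \<xi> t) \<noteq> \<infinity>) \<and>
    (\<lambda>t. real (the_enat (entanglement c (evolved_stab a \<xi> t))) / real t)
      \<longlonglongrightarrow> real_of_int (ldeg (mtrace a))"
proof -
  have det: "mdet a = 1" using assms(1) by (simp add: centered_def)
  obtain p q where bez: "p * fst \<xi> + q * snd \<xi> = 1" using bezout_lp[OF assms(4)] by blast
  have pxi: "palv \<xi>" using assms(2,3) by (simp add: palv_def)
  define Z where "Z t = zt a \<xi> t" for t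
  define D where "D t = Max (psupp (Z t))" for t
  define \<tau> where "\<tau> = mtrace a"
  define d where "d = ldeg \<tau>"
  have pZ: "palv (Z t)" for t unfolding Z_def by (rule palv_zt[OF assms(1) pxi])
  have nZ: "Z t \<noteq> (0, 0)" for t unfolding Z_def by (rule zt_nz[OF det bez])
  have ent: "entanglement c (evolved_stab a \<xi> t) = enat (nat (D t))" for t
  proof -
    obtain p' q' where b': "p' * fst (Z t) + q' * snd (Z t) = 1"
      using bezout_zt[OF det bez, of t] unfolding Z_def by blast
    show ?thesis unfolding evolved_eq[OF det] D_def
      using ent_value[OF pZ b', of c] unfolding Z_def by simp
  qed
  have Dpos: "0 \<le> D t" for t unfolding D_def by (rule D_nonneg[OF pZ nZ])
  have rec: "Z (Suc (Suc t)) = padd (sc \<tau> (Z (Suc t))) (Z t)" for t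
    unfolding Z_def \<tau>_def by (rule zt_rec[OF det])
  have tk: "\<forall>k\<in>ks \<tau>. k \<le> d" unfolding d_def using ldeg_ge by blast
  have rec1: "D (Suc (Suc t)) \<le> max (d + D (Suc t)) (D t)" for t
  proof -
    have "x \<le> max (d + D (Suc t)) (D t)" if x: "x \<in> psupp (Z (Suc (Suc t)))" for x
    proof -
      have "x \<in> psupp (sc \<tau> (Z (Suc t))) \<or> x \<in> psupp (Z t)"
        using x psupp_padd[of "sc \<tau> (Z (Suc t))" "Z t"] unfolding rec by blast
      then show ?thesis
      proof
        assume "x \<in> psupp (sc \<tau> (Z (Suc t)))"
        then have "x \<le> d + D (Suc t)" using psupp_sc_le[OF _ tk] unfolding D_def by blast
        then show ?thesis by simp
      next
        assume "x \<in> psupp (Z t)"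
        then have "x \<le> D t" unfolding D_def by simp
        then show ?thesis by simp
      qed
    qed
    then show ?thesis unfolding D_def[of "Suc (Suc t)"]
      using psupp_nonempty[OF nZ] by (intro Max.boundedI) simp_all
  qed
  have rec2: "D (Suc (Suc t)) = d + D (Suc t)" if dpos: "0 < d" and lt: "D t < d + D (Suc t)" for t
  proof -
    have tau: "\<tau> \<noteq> 0" "Max (ks \<tau>) = d" using ldeg_pos[of \<tau>] dpos unfolding d_def by auto
    let ?x = "d + D (Suc t)"
    have xin: "?x \<in> psupp (sc \<tau> (Z (Suc t)))"
      using psupp_sc_bounds(1)[OF pZ nZ tau(1)] tau(2) unfolding D_def by simp
    have xout: "?x \<notin> psupp (Z t)"
    proof
      assume "?x \<in> psupp (Z t)"
      then have "?x \<le> D t" unfolding D_def by simp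
      then show False using lt by simp
    qed
    have "?x \<in> psupp (Z (Suc (Suc t)))"
      using xin lookup_outside_psupp[OF xout] unfolding rec
      by (auto simp: psupp_def padd_def in_keys_iff lookup_add)
    then have "?x \<le> D (Suc (Suc t))" unfolding D_def by simp
    moreover have "D (Suc (Suc t)) \<le> ?x" using rec1[of t] lt by simp
    ultimately show ?thesis by simp
  qed
  have d0: "0 \<le> d" unfolding d_def by (rule ldeg_nonneg)
  have lim: "(\<lambda>t. real_of_int (D t) / real t) \<longlonglongrightarrow> real_of_int d"
    by (rule lim_from_bound[OF growth_bound[of d D, OF d0 Dpos rec1 rec2]])
  have seq: "real (the_enat (entanglement c (evolved_stab a \<xi> t))) = real_of_int (D t)" for t
    using ent[of t] Dpos[of t] by simp
  show ?thesis
  proof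
    show "\<forall>t. entanglement c (evolved_stab a \<xi> t) \<noteq> \<infinity>" using ent by simp
    show "(\<lambda>t. real (the_enat (entanglement c (evolved_stab a \<xi> t))) / real t)
      \<longlonglongrightarrow> real_of_int (ldeg (mtrace a))"
      using lim unfolding seq d_def \<tau>_def .
  qed
qed


end
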